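(* Let $X,Y$ be metric spaces, $X\times Y$ with the maximum metric, $\Delta$ a scale and $g,h$ Hausdorff functions. For any set $E\subseteq X\times Y$, $$\mathcal P^{gh}_{\Delta,0}(E)\ge\int^*\underline{\mathcal B}^{g}_0(E_x)\,d\mathcal P^{h}_{\Delta}(x).$$
   Context: In a metric space $(X,d)$: $\operatorname{gap}F=\inf\{d(x,y):x,y\in F,x\neq y\}$, $C_\delta(E)=\sup\{|F|:F\subseteq E,\operatorname{gap}F>\delta\}$. A Hausdorff function is a nondecreasing $g:(0,\infty)\to(0,\infty)$; $gh$ is the pointwise product. A scale is a set $\Delta\subseteq(0,\infty)$ with $0$ in its closure. A packing is a family $\pi=\{(x_i,r_i):i\in I\}\subseteq X\times(0,\infty)$ with $d(x_i,x_j)>r_i$ for $i\ne j$; it is a packing of $E$ if all $x_i\in E$, $\Delta$-valued if all $r_i\in\Delta$, $\delta$-fine if all $r_i\le\delta$; $g(\pi)=\sum_ig(r_i)$. $\mathcal P^g_{\Delta,0}(E)=\inf_{\delta>0}\sup\{g(\pi):\pi$ a $\Delta$-valued $\delta$-fine packing of $E\}$; $\mathcal P^g_\Delta(E)=\inf\{\sum_n\mathcal P^g_{\Delta,0}(E_n):E\subseteq\bigcup_nE_n\}$ (countable covers), a Borel measure on Borel sets; $\underline{\mathcal B}^g_0(E)=\liminf_{\delta\to0}C_\delta(E)g(\delta)$. $E_x=\{y\in Y:(x,y)\in E\}$. Upper integral: $\int^*f\,d\mu=\inf\{\int\varphi\,d\mu:\varphi\ge f$ Borel measurable$\}$. *)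

theory Defs
  imports "HOL-Analysis.Analysis"
begin

definition gap :: "('a \<Rightarrow> 'a \<Rightarrow> real) \<Rightarrow> 'a set \<Rightarrow> ennreal" where
  "gap d F = (INF p \<in> {(x, y). x \<in> F \<and> y \<in> F \<and> x \<noteq> y}. ennreal (d (fst p) (snd p)))"

definition ecard :: "'a set \<Rightarrow> ennreal" where
  "ecard F = (if finite F then of_nat (card F) else \<infinity>)"

definition Cdelta :: "('a \<Rightarrow> 'a \<Rightarrow> real) \<Rightarrow> real \<Rightarrow> 'a set \<Rightarrow> ennreal" where
  "Cdelta d \<delta> E = (SUP F \<in> {F. F \<subseteq> E \<and> gap d F > ennreal \<delta>}. ecard F)"

definition hausdorff_fun :: "(real \<Rightarrow> real) \<Rightarrow> bool" where
  "hausdorff_fun g \<longleftrightarrow> mono_on {0<..} g \<and> (\<forall>t>0. g t > 0)"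

definition scale :: "real set \<Rightarrow> bool" where
  "scale \<Delta> \<longleftrightarrow> \<Delta> \<subseteq> {0<..} \<and> 0 \<in> closure \<Delta>"

text \<open>A packing is a family of pairs (x_i, r_i) with d(x_i,x_j) > r_i for i \<noteq> j;
  such families are necessarily injective, so they are represented as sets of pairs.\<close>
definition packing :: "('a \<Rightarrow> 'a \<Rightarrow> real) \<Rightarrow> ('a \<times> real) set \<Rightarrow> bool" where
  "packing d \<pi> \<longleftrightarrow> (\<forall>p\<in>\<pi>. snd p > 0) \<and>
     (\<forall>p\<in>\<pi>. \<forall>q\<in>\<pi>. p \<noteq> q \<longrightarrow> d (fst p) (fst q) > snd p)"

definition gsum :: "(real \<Rightarrow> real) \<Rightarrow> ('a \<times> real) set \<Rightarrow> ennreal" where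
  "gsum g \<pi> = (SUP F \<in> {F. finite F \<and> F \<subseteq> \<pi>}. \<Sum>p\<in>F. ennreal (g (snd p)))"

definition P0 :: "('a \<Rightarrow> 'a \<Rightarrow> real) \<Rightarrow> real set \<Rightarrow> (real \<Rightarrow> real) \<Rightarrow> 'a set \<Rightarrow> ennreal" where
  "P0 d \<Delta> g E = (INF \<delta> \<in> {0<..}. SUP \<pi> \<in> {\<pi>. packing d \<pi> \<and> fst ` \<pi> \<subseteq> E \<and> snd ` \<pi> \<subseteq> \<Delta>
       \<and> (\<forall>p\<in>\<pi>. snd p \<le> \<delta>)}. gsum g \<pi>)"

definition Pmeas :: "('a \<Rightarrow> 'a \<Rightarrow> real) \<Rightarrow> real set \<Rightarrow> (real \<Rightarrow> real) \<Rightarrow> 'a set \<Rightarrow> ennreal" where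
  "Pmeas d \<Delta> g E = (INF Es \<in> {Es :: nat \<Rightarrow> 'a set. E \<subseteq> (\<Union>n. Es n)}. \<Sum>n. P0 d \<Delta> g (Es n))"

definition Pmeasure :: "real set \<Rightarrow> (real \<Rightarrow> real) \<Rightarrow> 'a::metric_space measure" where
  "Pmeasure \<Delta> g = measure_of UNIV (sets borel) (Pmeas dist \<Delta> g)"

definition lowerB0 :: "('a \<Rightarrow> 'a \<Rightarrow> real) \<Rightarrow> (real \<Rightarrow> real) \<Rightarrow> 'a set \<Rightarrow> ennreal" where
  "lowerB0 d g E = Liminf (at_right 0) (\<lambda>\<delta>. Cdelta d \<delta> E * ennreal (g \<delta>))"

definition upper_integral :: "'a measure \<Rightarrow> ('a \<Rightarrow> ennreal) \<Rightarrow> ennreal" where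
  "upper_integral M f = (INF \<phi> \<in> {\<phi> \<in> borel_measurable M. \<forall>x\<in>space M. f x \<le> \<phi> x}. \<integral>\<^sup>+ x. \<phi> x \<partial>M)"

definition dmax :: "('a::metric_space \<times> 'b::metric_space) \<Rightarrow> ('a \<times> 'b) \<Rightarrow> real" where
  "dmax p q = max (dist (fst p) (fst q)) (dist (snd p) (snd q))"

definition xsection :: "('a \<times> 'b) set \<Rightarrow> 'a \<Rightarrow> 'b set" where
  "xsection E x = {y. (x, y) \<in> E}"

end

theory Submission
  imports Defs
begin


lemma gsum_finite:
  assumes "finite \<pi>" shows "gsum g \<pi> = (\<Sum>p\<in>\<pi>. ennreal (g (snd p)))"
  unfolding gsum_def
proof (rule antisym)
  show "(SUP F\<in>{F. finite F \<and> F \<subseteq> \<pi>}. \<Sum>p\<in>F. ennreal (g (snd p))) \<le> (\<Sum>p\<in>\<pi>. ennreal (g (snd p)))"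
    by (rule SUP_least) (use assms in \<open>auto intro: sum_mono2\<close>)
  show "(\<Sum>p\<in>\<pi>. ennreal (g (snd p))) \<le> (SUP F\<in>{F. finite F \<and> F \<subseteq> \<pi>}. \<Sum>p\<in>F. ennreal (g (snd p)))"
    by (rule SUP_upper) (use assms in auto)
qed

lemma packing_subset: "packing d \<pi> \<Longrightarrow> \<pi>' \<subseteq> \<pi> \<Longrightarrow> packing d \<pi>'"
  unfolding packing_def by (meson subsetD)

definition SUPd :: "('a \<Rightarrow> 'a \<Rightarrow> real) \<Rightarrow> real set \<Rightarrow> (real \<Rightarrow> real) \<Rightarrow> 'a set \<Rightarrow> real \<Rightarrow> ennreal" where
  "SUPd d \<Delta> g E \<delta> = (SUP \<pi> \<in> {\<pi>. packing d \<pi> \<and> fst ` \<pi> \<subseteq> E \<and> snd ` \<pi> \<subseteq> \<Delta>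
       \<and> (\<forall>p\<in>\<pi>. snd p \<le> \<delta>)}. gsum g \<pi>)"

lemma P0_SUPd: "P0 d \<Delta> g E = (INF \<delta> \<in> {0<..}. SUPd d \<Delta> g E \<delta>)"
  unfolding P0_def SUPd_def ..

lemma SUPd_fin: "SUPd d \<Delta> g E \<delta> = (SUP \<pi> \<in> {\<pi>. finite \<pi> \<and> packing d \<pi> \<and> fst ` \<pi> \<subseteq> E \<and> snd ` \<pi> \<subseteq> \<Delta>
       \<and> (\<forall>p\<in>\<pi>. snd p \<le> \<delta>)}. \<Sum>p\<in>\<pi>. ennreal (g (snd p)))" (is "?L = ?R")
proof (rule antisym)
  show "?L \<le> ?R"
    unfolding SUPd_def
  proof (rule SUP_least)
    fix \<pi> assume \<pi>: "\<pi> \<in> {\<pi>. packing d \<pi> \<and> fst ` \<pi> \<subseteq> E \<and> snd ` \<pi> \<subseteq> \<Delta> \<and> (\<forall>p\<in>\<pi>. snd p \<le> \<delta>)}"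
    show "gsum g \<pi> \<le> ?R"
      unfolding gsum_def
    proof (rule SUP_least)
      fix F assume "F \<in> {F. finite F \<and> F \<subseteq> \<pi>}"
      with \<pi> show "(\<Sum>p\<in>F. ennreal (g (snd p))) \<le> ?R"
        by (intro SUP_upper) (auto intro: packing_subset)
    qed
  qed
  show "?R \<le> ?L"
  proof (rule SUP_least)
    fix \<pi> assume \<pi>: "\<pi> \<in> {\<pi>. finite \<pi> \<and> packing d \<pi> \<and> fst ` \<pi> \<subseteq> E \<and> snd ` \<pi> \<subseteq> \<Delta>
       \<and> (\<forall>p\<in>\<pi>. snd p \<le> \<delta>)}"
    have le: "gsum g \<pi> \<le> ?L" unfolding SUPd_def by (rule SUP_upper) (use \<pi> in auto)
    have fin: "finite \<pi>" using \<pi> by simp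
    show "(\<Sum>p\<in>\<pi>. ennreal (g (snd p))) \<le> ?L" using le unfolding gsum_finite[OF fin] .
  qed
qed

lemma P0_empty: "P0 d \<Delta> g {} = 0"
proof -
  have "SUPd d \<Delta> g {} 1 \<le> 0"
    unfolding SUPd_def by (rule SUP_least) (auto simp: gsum_def)
  hence "P0 d \<Delta> g {} \<le> 0" unfolding P0_SUPd by (metis INF_lower2 greaterThan_iff zero_less_one)
  thus ?thesis by simp
qed

lemma Pmeas_le_P0: "Pmeas d \<Delta> g A \<le> P0 d \<Delta> g A"
proof -
  let ?Es = "\<lambda>n::nat. if n = 0 then A else {}"
  have "(\<Sum>n. P0 d \<Delta> g (?Es n)) = (\<Sum>n<1. P0 d \<Delta> g (?Es n))"
    by (rule suminf_finite) (auto simp: P0_empty)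
  also have "\<dots> = P0 d \<Delta> g A" by simp
  finally have "(\<Sum>n. P0 d \<Delta> g (?Es n)) = P0 d \<Delta> g A" .
  moreover have "A \<subseteq> (\<Union>n. ?Es n)" by (auto intro!: exI[of _ 0])
  ultimately show ?thesis unfolding Pmeas_def by (intro INF_lower2[where i="?Es"]) auto
qed

lemma Pmeas_mono: "A \<subseteq> B \<Longrightarrow> Pmeas d \<Delta> g A \<le> Pmeas d \<Delta> g B"
  unfolding Pmeas_def by (rule INF_superset_mono) auto


lemma perturb:
  fixes \<pi> :: "('a::metric_space \<times> real) set"
  assumes fin: "finite \<pi>" and pk: "packing dist \<pi>" and cl: "fst ` \<pi> \<subseteq> closure A"
  shows "\<exists>a. (\<forall>p\<in>\<pi>. a p \<in> A) \<and> inj_on (\<lambda>p. (a p, snd p)) \<pi> \<and> packing dist ((\<lambda>p. (a p, snd p)) ` \<pi>)"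
proof -
  define Pr where "Pr = {(p,q). p \<in> \<pi> \<and> q \<in> \<pi> \<and> p \<noteq> q}"
  define S where "S = (\<lambda>(p,q). dist (fst p) (fst q) - snd p) ` Pr"
  define \<eta> where "\<eta> = Min (insert 1 S)"
  have finS: "finite S"
  proof -
    have "finite Pr"
      unfolding Pr_def by (rule finite_subset[of _ "\<pi> \<times> \<pi>"]) (use fin in auto)
    thus ?thesis unfolding S_def by simp
  qed
  have Spos: "\<forall>s\<in>S. s > 0" using pk unfolding S_def Pr_def packing_def by auto
  have eta_pos: "\<eta> > 0" unfolding \<eta>_def using finS Spos by (subst Min_gr_iff) auto
  have eta_le: "\<eta> \<le> dist (fst p) (fst q) - snd p" if "p \<in> \<pi>" "q \<in> \<pi>" "p \<noteq> q" for p q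
  proof -
    have "dist (fst p) (fst q) - snd p \<in> S" unfolding S_def Pr_def using that by force
    thus ?thesis unfolding \<eta>_def using finS by (intro Min_le) auto
  qed
  have "\<forall>p\<in>\<pi>. \<exists>y\<in>A. dist (fst p) y < \<eta>/2"
  proof
    fix p assume "p \<in> \<pi>"
    hence "fst p \<in> closure A" using cl by auto
    thus "\<exists>y\<in>A. dist (fst p) y < \<eta>/2" using eta_pos by (intro closure_approachableD) auto
  qed
  then obtain a where a: "\<And>p. p \<in> \<pi> \<Longrightarrow> a p \<in> A" "\<And>p. p \<in> \<pi> \<Longrightarrow> dist (fst p) (a p) < \<eta>/2"
    by metis
  have far: "dist (a p) (a q) > snd p" if "p \<in> \<pi>" "q \<in> \<pi>" "p \<noteq> q" for p q
  proof -
    have "dist (fst p) (fst q) \<le> dist (fst p) (a p) + dist (a p) (a q) + dist (a q) (fst q)"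
      by (metis add.commute dist_triangle order_trans add_right_mono)
    moreover have "dist (a q) (fst q) < \<eta>/2" using a(2)[OF that(2)] by (simp add: dist_commute)
    ultimately show ?thesis using a(2)[OF that(1)] eta_le[OF that] by linarith
  qed
  have sp: "snd p > 0" if "p \<in> \<pi>" for p using pk that unfolding packing_def by auto
  have inj: "inj_on (\<lambda>p. (a p, snd p)) \<pi>"
  proof (rule inj_onI)
    fix p q assume "p \<in> \<pi>" "q \<in> \<pi>" "(a p, snd p) = (a q, snd q)"
    thus "p = q" using far[of p q] sp[of p] by fastforce
  qed
  have "packing dist ((\<lambda>p. (a p, snd p)) ` \<pi>)"
    unfolding packing_def
  proof (intro conjI ballI impI)
    fix x assume "x \<in> (\<lambda>p. (a p, snd p)) ` \<pi>"
    thus "snd x > 0" using sp by auto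
  next
    fix x y assume "x \<in> (\<lambda>p. (a p, snd p)) ` \<pi>" "y \<in> (\<lambda>p. (a p, snd p)) ` \<pi>" "x \<noteq> y"
    then obtain p q where "p \<in> \<pi>" "q \<in> \<pi>" "x = (a p, snd p)" "y = (a q, snd q)" "p \<noteq> q" by auto
    thus "dist (fst x) (fst y) > snd x" using far by auto
  qed
  with a(1) inj show ?thesis by blast
qed

lemma SUPd_closure:
  fixes A :: "'a::metric_space set"
  shows "SUPd dist \<Delta> g (closure A) \<delta> \<le> SUPd dist \<Delta> g A \<delta>"
  unfolding SUPd_fin[of _ _ _ "closure A"]
proof (rule SUP_least)
  fix \<pi> :: "('a \<times> real) set"
  assume \<pi>: "\<pi> \<in> {\<pi>. finite \<pi> \<and> packing dist \<pi> \<and> fst ` \<pi> \<subseteq> closure A \<and> snd ` \<pi> \<subseteq> \<Delta> \<and> (\<forall>p\<in>\<pi>. snd p \<le> \<delta>)}"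
  then obtain a where a: "\<forall>p\<in>\<pi>. a p \<in> A" "inj_on (\<lambda>p. (a p, snd p)) \<pi>" "packing dist ((\<lambda>p. (a p, snd p)) ` \<pi>)"
    using perturb[of \<pi> A] by auto
  let ?\<pi>' = "(\<lambda>p. (a p, snd p)) ` \<pi>"
  have "(\<Sum>p\<in>?\<pi>'. ennreal (g (snd p))) = (\<Sum>p\<in>\<pi>. ennreal (g (snd p)))"
    using a(2) by (subst sum.reindex) auto
  moreover have "(\<Sum>p\<in>?\<pi>'. ennreal (g (snd p))) \<le> SUPd dist \<Delta> g A \<delta>"
    unfolding SUPd_fin[of _ _ _ A] by (rule SUP_upper) (use \<pi> a in auto)
  ultimately show "(\<Sum>p\<in>\<pi>. ennreal (g (snd p))) \<le> SUPd dist \<Delta> g A \<delta>" by simp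
qed

lemma P0_closure:
  fixes A :: "'a::metric_space set"
  shows "P0 dist \<Delta> g (closure A) \<le> P0 dist \<Delta> g A"
  unfolding P0_SUPd by (rule INF_mono) (use SUPd_closure in blast)

lemma hull_approx:
  fixes A :: "'a::metric_space set"
  assumes "e > 0"
  shows "\<exists>H \<in> sets borel. A \<subseteq> H \<and> Pmeas dist \<Delta> g H \<le> Pmeas dist \<Delta> g A + ennreal e"
proof (cases "Pmeas dist \<Delta> g A = \<infinity>")
  case True thus ?thesis by (intro bexI[of _ UNIV]) auto
next
  case False
  hence "Pmeas dist \<Delta> g A < Pmeas dist \<Delta> g A + ennreal e"
    using assms by (simp add: ennreal_less_top order_less_le) 
  then obtain Es where Es: "A \<subseteq> (\<Union>n. Es n)" "(\<Sum>n. P0 dist \<Delta> g (Es n)) < Pmeas dist \<Delta> g A + ennreal e"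
    unfolding Pmeas_def[of _ _ _ A] by (auto simp: INF_less_iff)
  let ?H = "\<Union>n. closure (Es n)"
  have "?H \<in> sets borel" by (intro sets.countable_UN borel_closed) auto
  moreover have "A \<subseteq> ?H" using Es(1) closure_subset by blast
  moreover have "Pmeas dist \<Delta> g ?H \<le> (\<Sum>n. P0 dist \<Delta> g (closure (Es n)))"
    unfolding Pmeas_def by (rule INF_lower2[where i="\<lambda>n. closure (Es n)"]) auto
  moreover have "(\<Sum>n. P0 dist \<Delta> g (closure (Es n))) \<le> (\<Sum>n. P0 dist \<Delta> g (Es n))"
    by (intro suminf_le P0_closure) auto
  ultimately show ?thesis using Es(2) by (meson dual_order.trans order_less_imp_le)
qed

lemma hull:
  fixes A :: "'a::metric_space set"
  shows "\<exists>H \<in> sets borel. A \<subseteq> H \<and> Pmeas dist \<Delta> g H = Pmeas dist \<Delta> g A"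
proof -
  have "\<forall>j::nat. \<exists>H \<in> sets borel. A \<subseteq> H \<and> Pmeas dist \<Delta> g H \<le> Pmeas dist \<Delta> g A + ennreal (1 / Suc j)"
    by (intro allI hull_approx) auto
  then obtain Hs where Hs: "\<And>j. Hs j \<in> sets borel" "\<And>j. A \<subseteq> Hs j"
    "\<And>j. Pmeas dist \<Delta> g (Hs j) \<le> Pmeas dist \<Delta> g A + ennreal (1 / Suc j)"
    by metis
  let ?H = "\<Inter>j. Hs j"
  have B: "?H \<in> sets borel" using Hs(1) by auto
  have sub: "A \<subseteq> ?H" using Hs(2) by auto
  have "Pmeas dist \<Delta> g ?H \<le> Pmeas dist \<Delta> g A"
  proof (rule ennreal_le_epsilon)
    fix e :: real assume "0 < e"
    then obtain j :: nat where j: "1 / Suc j < e"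
      by (metis nat_approx_posE of_nat_Suc)
    have "Pmeas dist \<Delta> g ?H \<le> Pmeas dist \<Delta> g (Hs j)" by (intro Pmeas_mono) auto
    also have "\<dots> \<le> Pmeas dist \<Delta> g A + ennreal (1 / Suc j)" by (rule Hs(3))
    also have "\<dots> \<le> Pmeas dist \<Delta> g A + ennreal e" using j by (intro add_left_mono ennreal_leI) auto
    finally show "Pmeas dist \<Delta> g ?H \<le> Pmeas dist \<Delta> g A + ennreal e" .
  qed
  moreover have "Pmeas dist \<Delta> g A \<le> Pmeas dist \<Delta> g ?H" using sub by (rule Pmeas_mono)
  ultimately show ?thesis using B sub by (intro bexI[of _ ?H]) auto
qed


lemma sup_sum:
  fixes v :: "'i \<Rightarrow> 'c \<Rightarrow> ennreal"
  assumes "finite I" "\<And>i. i \<in> I \<Longrightarrow> Qs i \<noteq> {}"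
    "\<And>\<sigma>. (\<And>i. i \<in> I \<Longrightarrow> \<sigma> i \<in> Qs i) \<Longrightarrow> t + (\<Sum>i\<in>I. v i (\<sigma> i)) \<le> s"
  shows "t + (\<Sum>i\<in>I. SUP x\<in>Qs i. v i x) \<le> s"
  using assms
proof (induction I arbitrary: t rule: finite_induct)
  case empty
  thus ?case using empty.prems(2)[of "\<lambda>_. undefined"] by simp
next
  case (insert a I)
  let ?R = "\<Sum>i\<in>I. SUP x\<in>Qs i. v i x"
  have each: "v a x + (t + ?R) \<le> s" if x: "x \<in> Qs a" for x
  proof -
    have "(t + v a x) + ?R \<le> s"
    proof (rule insert.IH)
      show "\<And>i. i \<in> I \<Longrightarrow> Qs i \<noteq> {}" using insert.prems(1) by auto
    next
      fix \<sigma> assume \<sigma>: "\<And>i. i \<in> I \<Longrightarrow> \<sigma> i \<in> Qs i"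
      let ?\<sigma> = "\<sigma>(a := x)"
      have "t + (\<Sum>i\<in>insert a I. v i (?\<sigma> i)) \<le> s"
        by (rule insert.prems(2)) (use \<sigma> x in auto)
      moreover have "(\<Sum>i\<in>insert a I. v i (?\<sigma> i)) = v a x + (\<Sum>i\<in>I. v i (\<sigma> i))"
      proof -
        have "(\<Sum>i\<in>I. v i (?\<sigma> i)) = (\<Sum>i\<in>I. v i (\<sigma> i))"
          by (rule sum.cong) (use insert.hyps(2) in auto)
        thus ?thesis using insert.hyps by simp
      qed
      ultimately show "t + v a x + (\<Sum>i\<in>I. v i (\<sigma> i)) \<le> s" by (simp add: add.assoc)
    qed
    thus ?thesis by (simp add: ac_simps)
  qed
  have "t + (\<Sum>i\<in>insert a I. SUP x\<in>Qs i. v i x) = (SUP x\<in>Qs a. v a x) + (t + ?R)"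
    using insert.hyps by (simp add: ac_simps)
  also have "\<dots> = (SUP x\<in>Qs a. v a x + (t + ?R))"
    using insert.prems(1)[of a] by (simp add: ennreal_SUP_add_left)
  also have "\<dots> \<le> s" by (rule SUP_least) (rule each)
  finally show ?case .
qed

lemma inner_closed:
  fixes M :: "'a::metric_space measure"
  assumes sM: "sets M = sets borel" and D: "D \<in> sets borel" and fin: "emeasure M D < \<infinity>"
    and e: "e > 0"
  shows "\<exists>K. closed K \<and> K \<subseteq> D \<and> emeasure M (D - K) < ennreal e"
proof -
  have decN: "\<forall>\<^sub>F n in sequentially. emeasure M (X n \<inter> D) < ennreal \<epsilon>"
    if X: "\<And>n. X n \<in> sets borel" "decseq X" "(\<Inter>n. X n) = {}" and \<epsilon>: "\<epsilon> > 0" for X :: "nat \<Rightarrow> 'a set" and \<epsilon>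
  proof -
    have "(\<lambda>n. emeasure M (X n \<inter> D)) \<longlonglongrightarrow> emeasure M (\<Inter>n. X n \<inter> D)"
    proof (rule Lim_emeasure_decseq)
      show "range (\<lambda>n. X n \<inter> D) \<subseteq> sets M" using X(1) D sM by auto
      show "decseq (\<lambda>n. X n \<inter> D)" using X(2) by (auto simp: decseq_def)
      fix i show "emeasure M (X i \<inter> D) \<noteq> \<infinity>"
        using emeasure_mono[of "X i \<inter> D" D M] D sM fin by (auto simp: top_unique)
    qed
    moreover have "(\<Inter>n. X n \<inter> D) = {}" using X(3) by auto
    ultimately have "(\<lambda>n. emeasure M (X n \<inter> D)) \<longlonglongrightarrow> 0" by simp
    thus ?thesis using \<epsilon> by (intro order_tendstoD(2)) auto
  qed
  define R where "R = {B. B \<in> sets borel \<and> (\<forall>e>0. \<exists>F U. closed F \<and> open U \<and> F \<subseteq> B \<and> B \<subseteq> U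
      \<and> emeasure M ((U - F) \<inter> D) < ennreal e)}"
  have openR: "S \<in> R" if S: "open S" for S
  proof (cases "S = UNIV")
    case True thus ?thesis unfolding R_def by (intro CollectI conjI allI impI exI[of _ UNIV]) auto
  next
    case False
    define F where "F n = {x. 1 / real (Suc n) \<le> infdist x (- S)}" for n
    have clF: "closed (F n)" for n
      unfolding F_def by (rule closed_Collect_le[OF continuous_on_const continuous_on_infdist[OF continuous_on_id]])
    have FS: "F n \<subseteq> S" for n
    proof
      fix x assume "x \<in> F n"
      hence "1 / real (Suc n) \<le> infdist x (-S)" unfolding F_def by simp
      moreover have "0 < 1 / real (Suc n)" by simp
      ultimately have "infdist x (-S) \<noteq> 0" by linarith
      thus "x \<in> S" by (metis ComplI infdist_zero)
    qed
    have "\<forall>\<^sub>F n in sequentially. emeasure M ((S - F n) \<inter> D) < ennreal \<epsilon>" if "\<epsilon> > 0" for \<epsilon>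
    proof (rule decN)
      show "S - F n \<in> sets borel" for n using S clF by auto
      show "decseq (\<lambda>n. S - F n)"
      proof (rule decseq_SucI)
        fix n show "S - F (Suc n) \<subseteq> S - F n"
        proof -
          have le: "1 / real (Suc (Suc n)) \<le> 1 / real (Suc n)" by (intro divide_left_mono) auto
          have "F n \<subseteq> F (Suc n)"
          proof
            fix x assume "x \<in> F n"
            hence "1 / real (Suc n) \<le> infdist x (-S)" unfolding F_def by (simp only: mem_Collect_eq)
            hence "1 / real (Suc (Suc n)) \<le> infdist x (-S)" using le by linarith
            thus "x \<in> F (Suc n)" unfolding F_def by (simp only: mem_Collect_eq)
          qed
          thus ?thesis by blast
        qed
      qed
      show "(\<Inter>n. S - F n) = {}"
      proof -
        { fix x assume x: "x \<in> S"
          have "closed (- S)" using S by auto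
          moreover have "- S \<noteq> {}" using False by auto
          ultimately have "infdist x (-S) > 0" using x by (intro infdist_pos_not_in_closed) auto
          then obtain n :: nat where "1 / real (Suc n) < infdist x (-S)"
            by (metis nat_approx_posE of_nat_Suc)
          hence "\<exists>n. x \<in> F n" unfolding F_def by (auto intro!: exI[of _ n] less_imp_le)
        }
        thus ?thesis by auto
      qed
    qed (use that in auto)
    hence ev: "\<exists>n. emeasure M ((S - F n) \<inter> D) < ennreal \<epsilon>" if "\<epsilon> > 0" for \<epsilon>
      using that by (meson eventually_happens' sequentially_bot)
    show ?thesis unfolding R_def
    proof (intro CollectI conjI allI impI)
      show "S \<in> sets borel" using S by auto
      fix e :: real assume "e > 0"
      then obtain n where "emeasure M ((S - F n) \<inter> D) < ennreal e" using ev by blast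
      thus "\<exists>F' U. closed F' \<and> open U \<and> F' \<subseteq> S \<and> S \<subseteq> U \<and> emeasure M ((U - F') \<inter> D) < ennreal e"
        using S clF FS by blast
    qed
  qed
  have sa: "sigma_algebra UNIV R"
    unfolding sigma_algebra_iff2
  proof (intro conjI allI ballI impI)
    show "R \<subseteq> Pow UNIV" by simp
    show "{} \<in> R" using openR[of "{}"] by simp
  next
    fix s assume s: "s \<in> R"
    hence sb: "s \<in> sets borel" and H: "\<forall>e>0. \<exists>F U. closed F \<and> open U \<and> F \<subseteq> s \<and> s \<subseteq> U \<and> emeasure M ((U - F) \<inter> D) < ennreal e"
      unfolding R_def by auto
    show "UNIV - s \<in> R" unfolding R_def
    proof (intro CollectI conjI allI impI)
      show "UNIV - s \<in> sets borel" using sets.compl_sets[of s borel] sb by simp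
      fix e :: real assume e: "e > 0"
      from mp[OF spec[OF H, of e] e] obtain F U where FU: "closed F" "open U" "F \<subseteq> s" "s \<subseteq> U" "emeasure M ((U - F) \<inter> D) < ennreal e"
        by (elim exE conjE)
      have eq: "(- F) - (- U) = U - F" by (simp add: Diff_eq Int_commute)
      show "\<exists>F' U'. closed F' \<and> open U' \<and> F' \<subseteq> UNIV - s \<and> UNIV - s \<subseteq> U' \<and> emeasure M ((U' - F') \<inter> D) < ennreal e"
      proof (intro exI conjI)
        show "closed (- U)" using FU(2) by (rule open_closed[THEN iffD1])
        show "open (- F)" using FU(1) by (rule closed_open[THEN iffD1])
        show "- U \<subseteq> UNIV - s" using FU(4) by (simp add: Compl_eq_Diff_UNIV[symmetric])
        show "UNIV - s \<subseteq> - F" using FU(3) by (simp add: Compl_eq_Diff_UNIV[symmetric])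
        show "emeasure M ((- F - - U) \<inter> D) < ennreal e" unfolding eq by (rule FU(5))
      qed
    qed
  next
    fix A :: "nat \<Rightarrow> 'a set" assume A: "range A \<subseteq> R"
    hence Ab: "A i \<in> sets borel" for i unfolding R_def by auto
    show "(\<Union>i. A i) \<in> R" unfolding R_def
    proof (intro CollectI conjI allI impI)
      show "(\<Union>i. A i) \<in> sets borel" using Ab by auto
      fix e :: real assume e: "e > 0"
      have "\<forall>i. \<exists>F U. closed F \<and> open U \<and> F \<subseteq> A i \<and> A i \<subseteq> U \<and> emeasure M ((U - F) \<inter> D) < ennreal (e / 2 ^ (Suc (Suc i)))"
        using A e unfolding R_def by (auto simp: image_subset_iff)
      then obtain F U where FU: "\<And>i. closed (F i)" "\<And>i. open (U i)" "\<And>i. F i \<subseteq> A i" "\<And>i. A i \<subseteq> U i"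
        "\<And>i. emeasure M ((U i - F i) \<inter> D) < ennreal (e / 2 ^ (Suc (Suc i)))" by metis
      have Fb: "F i \<in> sets borel" "U i \<in> sets borel" for i using FU by auto
      have "\<forall>\<^sub>F n in sequentially. emeasure M (((\<Union>i. F i) - (\<Union>i<n. F i)) \<inter> D) < ennreal (e/2)"
      proof (rule decN)
        show "(\<Union>i. F i) - (\<Union>i<n. F i) \<in> sets borel" for n using Fb by auto
        show "decseq (\<lambda>n. (\<Union>i. F i) - (\<Union>i<n. F i))" by (rule decseq_SucI) auto
        show "(\<Inter>n. (\<Union>i. F i) - (\<Union>i<n. F i)) = {}" by (auto intro: lessI)
      qed (use e in auto)
      then obtain n where n: "emeasure M (((\<Union>i. F i) - (\<Union>i<n. F i)) \<inter> D) < ennreal (e/2)"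
        by (meson eventually_happens' sequentially_bot)
      let ?F = "\<Union>i<n. F i" and ?U = "\<Union>i. U i"
      have "(?U - ?F) \<inter> D \<subseteq> (\<Union>i. (U i - F i) \<inter> D) \<union> ((\<Union>i. F i) - ?F) \<inter> D" by blast
      hence "emeasure M ((?U - ?F) \<inter> D) \<le> emeasure M ((\<Union>i. (U i - F i) \<inter> D) \<union> ((\<Union>i. F i) - ?F) \<inter> D)"
        using Fb D sM by (intro emeasure_mono) auto
      also have "\<dots> \<le> emeasure M (\<Union>i. (U i - F i) \<inter> D) + emeasure M (((\<Union>i. F i) - ?F) \<inter> D)"
        using Fb D sM by (intro emeasure_subadditive) auto
      finally have A1: "emeasure M ((?U - ?F) \<inter> D) \<le> emeasure M (\<Union>i. (U i - F i) \<inter> D) + emeasure M (((\<Union>i. F i) - ?F) \<inter> D)" .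
      have "emeasure M (\<Union>i. (U i - F i) \<inter> D) \<le> (\<Sum>i. emeasure M ((U i - F i) \<inter> D))"
        using Fb D sM by (intro emeasure_subadditive_countably) auto
      also have "\<dots> \<le> (\<Sum>i. ennreal (e / 2 ^ (Suc (Suc i))))"
        using FU(5) by (intro suminf_le) (auto intro: less_imp_le)
      also have "\<dots> = ennreal (e / 2)"
      proof -
        have "(\<lambda>i. e / 2 ^ (Suc (Suc i))) sums (e / 2)"
        proof -
          have "(\<lambda>i. (e/4) * (1/2)^i) sums ((e/4) * (1 / (1 - 1/2)))"
            by (intro sums_mult geometric_sums) auto
          moreover have "(\<lambda>i. (e/4) * (1/2)^i) = (\<lambda>i. e / 2 ^ (Suc (Suc i)))"
            by (auto simp: power_divide field_simps)
          ultimately show ?thesis by simp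
        qed
        thus ?thesis using e by (subst suminf_ennreal2) (auto simp: sums_iff)
      qed
      finally have A2: "emeasure M (\<Union>i. (U i - F i) \<inter> D) \<le> ennreal (e / 2)" .
      have "emeasure M ((?U - ?F) \<inter> D) < ennreal (e/2) + ennreal (e/2)"
      proof -
        let ?t = "emeasure M (((\<Union>i. F i) - ?F) \<inter> D)"
        have "emeasure M (\<Union>i. (U i - F i) \<inter> D) + ?t \<le> ennreal (e/2) + ?t"
          by (rule add_right_mono[OF A2])
        moreover have "ennreal (e/2) + ?t < ennreal (e/2) + ennreal (e/2)"
          using n by (simp add: ennreal_add_left_cancel_less)
        ultimately show ?thesis using A1 by (meson le_less_trans order_trans)
      qed
      hence "emeasure M ((?U - ?F) \<inter> D) < ennreal e"
        using e by (simp flip: ennreal_plus)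
      moreover have "closed ?F" using FU(1) by auto
      moreover have "open ?U" using FU(2) by auto
      moreover have "?F \<subseteq> (\<Union>i. A i)" "(\<Union>i. A i) \<subseteq> ?U" using FU(3,4) by blast+
      ultimately show "\<exists>F U. closed F \<and> open U \<and> F \<subseteq> (\<Union>i. A i) \<and> (\<Union>i. A i) \<subseteq> U \<and> emeasure M ((U - F) \<inter> D) < ennreal e"
        by blast
    qed
  qed
  have "sets borel \<subseteq> R"
    unfolding sets_borel using sa openR by (intro sigma_algebra.sigma_sets_subset) auto
  with D have "D \<in> R" by (rule subsetD[rotated])
  hence "\<forall>e>0. \<exists>F U. closed F \<and> open U \<and> F \<subseteq> D \<and> D \<subseteq> U \<and> emeasure M ((U - F) \<inter> D) < ennreal e"
    unfolding R_def by (simp only: mem_Collect_eq conj_absorb) (rule conjunct2)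
  from mp[OF spec[OF this, of e] e] obtain F U where FU: "closed F" "open U" "F \<subseteq> D" "D \<subseteq> U" "emeasure M ((U - F) \<inter> D) < ennreal e"
    by (elim exE conjE)
  have "D - F = (U - F) \<inter> D" using FU by auto
  thus ?thesis using FU by (intro exI[of _ F] conjI) auto
qed


locale pm =
  fixes \<Delta> :: "real set" and h :: "real \<Rightarrow> real" and M :: "'a::metric_space measure"
  assumes M_def: "M = Pmeasure \<Delta> h"
    and ms: "measure_space UNIV (sets borel) (Pmeas dist \<Delta> h :: 'a set \<Rightarrow> ennreal)"
begin

abbreviation P :: "'a set \<Rightarrow> ennreal" where "P \<equiv> Pmeas dist \<Delta> h"

lemma sig: "sigma_sets UNIV (sets (borel :: 'a measure)) = sets borel"
  using sets.sigma_sets_eq[of "borel :: 'a measure"] by simp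

lemma sets_M: "sets M = sets borel"
  unfolding M_def Pmeasure_def by (simp add: sets_measure_of_conv sig)

lemma space_M: "space M = UNIV"
  unfolding M_def Pmeasure_def by (simp add: space_measure_of_conv)

lemma emeasure_M: "B \<in> sets borel \<Longrightarrow> emeasure M B = P B"
  unfolding M_def Pmeasure_def using ms by (simp add: emeasure_measure_of_conv sig)

lemma hullM: "\<exists>H\<in>sets borel. A \<subseteq> H \<and> emeasure M H = P A"
  using hull[of A \<Delta> h] emeasure_M by metis

lemma P_le_M: "B \<in> sets borel \<Longrightarrow> A \<subseteq> B \<Longrightarrow> P A \<le> emeasure M B"
  using emeasure_M Pmeas_mono by metis

lemma P_subadd: "P (A \<union> B) \<le> P A + P B"
proof -
  obtain HA where HA: "HA \<in> sets borel" "A \<subseteq> HA" "emeasure M HA = P A" using hullM by blast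
  obtain HB where HB: "HB \<in> sets borel" "B \<subseteq> HB" "emeasure M HB = P B" using hullM by blast
  have "P (A \<union> B) \<le> emeasure M (HA \<union> HB)" using HA HB by (intro P_le_M) auto
  also have "\<dots> \<le> emeasure M HA + emeasure M HB" using HA HB sets_M by (intro emeasure_subadditive) auto
  finally show ?thesis using HA HB by simp
qed

lemma P_incseq:
  assumes inc: "incseq A" shows "P (\<Union>n. A n) = (SUP n. P (A n))"
proof (rule antisym)
  show "(SUP n. P (A n)) \<le> P (\<Union>n. A n)" by (rule SUP_least) (intro Pmeas_mono, blast)
  have "\<forall>n. \<exists>H\<in>sets borel. A n \<subseteq> H \<and> emeasure M H = P (A n)" using hullM by blast
  then obtain H where H: "\<And>n. H n \<in> sets borel" "\<And>n. A n \<subseteq> H n" "\<And>n. emeasure M (H n) = P (A n)"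
    by metis
  define H' where "H' n = (\<Inter>m\<in>{n..}. H m)" for n
  have H'b: "H' n \<in> sets borel" for n unfolding H'_def using H(1) by (intro sets.countable_INT') auto
  have H'inc: "incseq H'" unfolding H'_def incseq_def by auto
  have AH': "A n \<subseteq> H' n" for n
    unfolding H'_def using H(2) inc by (auto simp: incseq_def) blast
  have H'le: "emeasure M (H' n) \<le> P (A n)" for n
  proof -
    have "emeasure M (H' n) \<le> emeasure M (H n)"
      using H'b H(1) sets_M by (intro emeasure_mono) (auto simp: H'_def)
    thus ?thesis using H(3) by simp
  qed
  have "P (\<Union>n. A n) \<le> emeasure M (\<Union>n. H' n)"
    using H'b AH' by (intro P_le_M) auto
  also have "\<dots> = (SUP n. emeasure M (H' n))"
    using H'b H'inc sets_M by (intro SUP_emeasure_incseq[symmetric]) auto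
  also have "\<dots> \<le> (SUP n. P (A n))" by (intro SUP_mono) (use H'le in auto)
  finally show "P (\<Union>n. A n) \<le> (SUP n. P (A n))" .
qed

lemma inner_M: "D \<in> sets borel \<Longrightarrow> emeasure M D < \<infinity> \<Longrightarrow> e > 0 \<Longrightarrow>
  \<exists>K. closed K \<and> K \<subseteq> D \<and> emeasure M (D - K) < ennreal e"
  using inner_closed[OF sets_M] by blast

end


context pm begin

lemma sep_sets:
  fixes m :: nat and S :: "nat \<Rightarrow> 'a set" and C :: "nat \<Rightarrow> real" and u :: "'a \<Rightarrow> real"
  assumes Cnn: "\<And>i. i < m \<Longrightarrow> C i \<ge> 0"
  and uC: "\<And>i x. i < m \<Longrightarrow> x \<in> S i \<Longrightarrow> C i \<le> u x"
  and hnn: "\<And>t. t > 0 \<Longrightarrow> h t \<ge> 0"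
  and far: "\<And>i j x y. i < m \<Longrightarrow> j < m \<Longrightarrow> i \<noteq> j \<Longrightarrow> x \<in> S i \<Longrightarrow> y \<in> S j \<Longrightarrow> \<eta> < dist x y"
  and \<eta>: "\<eta> > 0" and \<delta>1: "\<delta>1 > 0"
  and Hyp: "\<And>\<pi>. finite \<pi> \<Longrightarrow> packing dist \<pi> \<Longrightarrow> snd ` \<pi> \<subseteq> \<Delta> \<Longrightarrow> (\<forall>p\<in>\<pi>. snd p \<le> \<delta>1) \<Longrightarrow>
      (\<Sum>p\<in>\<pi>. ennreal (u (fst p) * h (snd p))) \<le> s"
  shows "(\<Sum>i<m. ennreal (C i) * P (S i)) \<le> s"
proof -
  define \<delta> where "\<delta> = min \<delta>1 \<eta>"
  have \<delta>pos: "\<delta> > 0" using \<delta>1 \<eta> by (simp add: \<delta>_def)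
  define Q where "Q i = {\<pi>. finite \<pi> \<and> packing dist \<pi> \<and> fst ` \<pi> \<subseteq> S i \<and> snd ` \<pi> \<subseteq> \<Delta> \<and> (\<forall>p\<in>\<pi>. snd p \<le> \<delta>)}" for i
  define v where "v i (\<pi> :: ('a \<times> real) set) = ennreal (C i) * (\<Sum>p\<in>\<pi>. ennreal (h (snd p)))" for i \<pi>
  have Qne: "Q i \<noteq> {}" for i
  proof -
    have "{} \<in> Q i" unfolding Q_def packing_def by simp
    thus ?thesis by blast
  qed
  have main: "0 + (\<Sum>i\<in>{..<m}. SUP \<pi>\<in>Q i. v i \<pi>) \<le> s"
  proof (rule sup_sum)
    show "finite {..<m}" by simp
    show "\<And>i. i \<in> {..<m} \<Longrightarrow> Q i \<noteq> {}" using Qne by blast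
    fix \<sigma> assume \<sigma>: "\<And>i. i \<in> {..<m} \<Longrightarrow> \<sigma> i \<in> Q i"
    let ?\<pi> = "\<Union>i\<in>{..<m}. \<sigma> i"
    have \<sigma>i: "finite (\<sigma> i)" "packing dist (\<sigma> i)" "fst ` \<sigma> i \<subseteq> S i" "snd ` \<sigma> i \<subseteq> \<Delta>" "\<forall>p\<in>\<sigma> i. snd p \<le> \<delta>"
      if "i < m" for i
      using \<sigma>[of i] that unfolding Q_def by auto
    have disj: "\<sigma> i \<inter> \<sigma> j = {}" if "i < m" "j < m" "i \<noteq> j" for i j
    proof (rule ccontr)
      assume "\<sigma> i \<inter> \<sigma> j \<noteq> {}" then obtain p where "p \<in> \<sigma> i" "p \<in> \<sigma> j" by blast
      hence "fst p \<in> S i" "fst p \<in> S j" using \<sigma>i(3)[OF that(1)] \<sigma>i(3)[OF that(2)] by auto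
      hence "\<eta> < dist (fst p) (fst p)" using far[OF that] by blast
      thus False using \<eta> by simp
    qed
    have pk: "packing dist ?\<pi>" unfolding packing_def
    proof (intro conjI ballI impI)
      fix p assume "p \<in> ?\<pi>" then obtain i where "i < m" "p \<in> \<sigma> i" by blast
      thus "snd p > 0" using \<sigma>i(2) unfolding packing_def by blast
    next
      fix p q assume "p \<in> ?\<pi>" "q \<in> ?\<pi>" "p \<noteq> q"
      then obtain i j where ij: "i < m" "j < m" "p \<in> \<sigma> i" "q \<in> \<sigma> j" by blast
      show "dist (fst p) (fst q) > snd p"
      proof (cases "i = j")
        case True
        have "packing dist (\<sigma> i)" by (rule \<sigma>i(2)[OF ij(1)])
        thus ?thesis using True ij \<open>p \<noteq> q\<close> unfolding packing_def by blast
      next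
        case False
        have "fst p \<in> S i" "fst q \<in> S j" using \<sigma>i(3)[OF ij(1)] \<sigma>i(3)[OF ij(2)] ij by auto
        hence "\<eta> < dist (fst p) (fst q)" using far[OF ij(1,2) False] by blast
        moreover have "snd p \<le> \<delta>" using \<sigma>i(5)[OF ij(1)] ij(3) by blast
        ultimately show ?thesis unfolding \<delta>_def by linarith
      qed
    qed
    have "(\<Sum>i\<in>{..<m}. v i (\<sigma> i)) \<le> (\<Sum>i\<in>{..<m}. \<Sum>p\<in>\<sigma> i. ennreal (u (fst p) * h (snd p)))"
    proof (rule sum_mono)
      fix i assume i: "i \<in> {..<m}"
      have "v i (\<sigma> i) = (\<Sum>p\<in>\<sigma> i. ennreal (C i) * ennreal (h (snd p)))"
        unfolding v_def by (simp add: sum_distrib_left)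
      also have "\<dots> \<le> (\<Sum>p\<in>\<sigma> i. ennreal (u (fst p) * h (snd p)))"
      proof (rule sum_mono)
        fix p assume p: "p \<in> \<sigma> i"
        have sp: "snd p > 0" using \<sigma>i(2)[of i] i p unfolding packing_def by auto
        have Cu: "C i \<le> u (fst p)" using uC[of i "fst p"] \<sigma>i(3)[of i] i p by auto
        have "ennreal (C i) * ennreal (h (snd p)) = ennreal (C i * h (snd p))"
          using Cnn[of i] i hnn[OF sp] by (simp add: ennreal_mult)
        also have "\<dots> \<le> ennreal (u (fst p) * h (snd p))"
          using Cu hnn[OF sp] by (intro ennreal_leI mult_right_mono) auto
        finally show "ennreal (C i) * ennreal (h (snd p)) \<le> ennreal (u (fst p) * h (snd p))" .
      qed
      finally show "v i (\<sigma> i) \<le> (\<Sum>p\<in>\<sigma> i. ennreal (u (fst p) * h (snd p)))" .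
    qed
    also have "\<dots> = (\<Sum>p\<in>?\<pi>. ennreal (u (fst p) * h (snd p)))"
    proof (rule sum.UNION_disjoint[symmetric])
      show "finite {..<m}" by simp
      show "\<forall>i\<in>{..<m}. finite (\<sigma> i)" using \<sigma>i(1) by blast
      show "\<forall>i\<in>{..<m}. \<forall>j\<in>{..<m}. i \<noteq> j \<longrightarrow> \<sigma> i \<inter> \<sigma> j = {}" using disj by blast
    qed
    also have "\<dots> \<le> s"
    proof (rule Hyp)
      show "finite ?\<pi>" using \<sigma>i(1) by blast
      show "packing dist ?\<pi>" by (rule pk)
      show "snd ` ?\<pi> \<subseteq> \<Delta>" using \<sigma>i(4) by blast
      show "\<forall>p\<in>?\<pi>. snd p \<le> \<delta>1"
      proof
        fix p assume "p \<in> ?\<pi>" then obtain i where "i < m" "p \<in> \<sigma> i" by blast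
        hence "snd p \<le> \<delta>" using \<sigma>i(5) by blast
        thus "snd p \<le> \<delta>1" unfolding \<delta>_def by linarith
      qed
    qed
    finally show "0 + (\<Sum>i\<in>{..<m}. v i (\<sigma> i)) \<le> s" by simp
  qed
  have "(\<Sum>i<m. ennreal (C i) * P (S i)) \<le> (\<Sum>i<m. SUP \<pi>\<in>Q i. v i \<pi>)"
  proof (rule sum_mono)
    fix i assume i: "i \<in> {..<m}"
    have "P (S i) \<le> P0 dist \<Delta> h (S i)" by (rule Pmeas_le_P0)
    also have "\<dots> \<le> SUPd dist \<Delta> h (S i) \<delta>" unfolding P0_SUPd using \<delta>pos by (intro INF_lower) auto
    also have "\<dots> = (SUP \<pi>\<in>Q i. \<Sum>p\<in>\<pi>. ennreal (h (snd p)))" unfolding SUPd_fin Q_def ..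
    finally have "ennreal (C i) * P (S i) \<le> ennreal (C i) * (SUP \<pi>\<in>Q i. \<Sum>p\<in>\<pi>. ennreal (h (snd p)))"
      by (rule mult_left_mono) simp
    also have "\<dots> = (SUP \<pi>\<in>Q i. v i \<pi>)" unfolding v_def by (rule SUP_mult_left_ennreal)
    finally show "ennreal (C i) * P (S i) \<le> (SUP \<pi>\<in>Q i. v i \<pi>)" .
  qed
  also have "\<dots> \<le> s" using main by simp
  finally show ?thesis .
qed

lemma sep:
  fixes m :: nat and G Dd :: "nat \<Rightarrow> 'a set" and C :: "nat \<Rightarrow> real" and u :: "'a \<Rightarrow> real"
  assumes Db: "\<And>i. i < m \<Longrightarrow> Dd i \<in> sets borel"
  and Ddisj: "\<And>i j. i < m \<Longrightarrow> j < m \<Longrightarrow> i \<noteq> j \<Longrightarrow> Dd i \<inter> Dd j = {}"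
  and Dfin: "\<And>i. i < m \<Longrightarrow> emeasure M (Dd i) < \<infinity>"
  and GD: "\<And>i. i < m \<Longrightarrow> G i \<subseteq> Dd i"
  and Cnn: "\<And>i. i < m \<Longrightarrow> C i \<ge> 0"
  and uC: "\<And>i x. i < m \<Longrightarrow> x \<in> G i \<Longrightarrow> C i \<le> u x"
  and hnn: "\<And>t. t > 0 \<Longrightarrow> h t \<ge> 0"
  and \<delta>1: "\<delta>1 > 0"
  and Hyp: "\<And>\<pi>. finite \<pi> \<Longrightarrow> packing dist \<pi> \<Longrightarrow> snd ` \<pi> \<subseteq> \<Delta> \<Longrightarrow> (\<forall>p\<in>\<pi>. snd p \<le> \<delta>1) \<Longrightarrow>
      (\<Sum>p\<in>\<pi>. ennreal (u (fst p) * h (snd p))) \<le> s"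
  shows "(\<Sum>i<m. ennreal (C i) * P (G i)) \<le> s"
proof (rule ennreal_le_epsilon)
  fix e :: real assume e: "e > 0"
  define \<eta>0 where "\<eta>0 = e / (1 + (\<Sum>i<m. C i))"
  have sumC: "(\<Sum>i<m. C i) \<ge> 0" using Cnn by (intro sum_nonneg) auto
  have \<eta>0: "\<eta>0 > 0" unfolding \<eta>0_def using e sumC by simp
  have "\<forall>i. \<exists>K. i < m \<longrightarrow> closed K \<and> K \<subseteq> Dd i \<and> emeasure M (Dd i - K) < ennreal \<eta>0"
  proof
    fix i show "\<exists>K. i < m \<longrightarrow> closed K \<and> K \<subseteq> Dd i \<and> emeasure M (Dd i - K) < ennreal \<eta>0"
    proof (cases "i < m")
      case True thus ?thesis using inner_M[OF Db[OF True] Dfin[OF True] \<eta>0] by blast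
    qed simp
  qed
  then obtain K where K: "\<And>i. i < m \<Longrightarrow> closed (K i)" "\<And>i. i < m \<Longrightarrow> K i \<subseteq> Dd i"
    "\<And>i. i < m \<Longrightarrow> emeasure M (Dd i - K i) < ennreal \<eta>0" by metis
  define U where "U i n = {x \<in> G i \<inter> K i. \<forall>l<m. l \<noteq> i \<longrightarrow> (\<forall>y\<in>K l. 1 / real (Suc n) < dist x y)}" for i n
  have bound: "(\<Sum>i<m. ennreal (C i) * P (U i n)) \<le> s" for n
  proof (rule sep_sets[where \<eta>="1 / real (Suc n)" and u=u])
    show "\<And>i. i < m \<Longrightarrow> C i \<ge> 0" by (rule Cnn)
    show "\<And>i x. i < m \<Longrightarrow> x \<in> U i n \<Longrightarrow> C i \<le> u x" using uC unfolding U_def by blast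
    show "\<And>t. t > 0 \<Longrightarrow> h t \<ge> 0" by (rule hnn)
    show "\<And>i j x y. i < m \<Longrightarrow> j < m \<Longrightarrow> i \<noteq> j \<Longrightarrow> x \<in> U i n \<Longrightarrow> y \<in> U j n \<Longrightarrow> 1 / real (Suc n) < dist x y"
    proof -
      fix i j x y assume "i < m" "j < m" "i \<noteq> j" "x \<in> U i n" "y \<in> U j n"
      thus "1 / real (Suc n) < dist x y" unfolding U_def by auto
    qed
    show "1 / real (Suc n) > 0" by simp
    show "\<delta>1 > 0" by (rule \<delta>1)
  qed (rule Hyp)
  have inc: "incseq (\<lambda>n. U i n)" for i
  proof (rule incseq_SucI)
    fix n
    have le: "1 / real (Suc (Suc n)) \<le> 1 / real (Suc n)" by (intro divide_left_mono) auto
    show "U i n \<subseteq> U i (Suc n)"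
    proof
      fix x assume "x \<in> U i n"
      hence xx: "x \<in> G i \<inter> K i \<and> (\<forall>l<m. l \<noteq> i \<longrightarrow> (\<forall>y\<in>K l. 1 / real (Suc n) < dist x y))"
        by (simp add: U_def)
      note x = conjunct1[OF xx] conjunct2[OF xx]
      have "\<forall>l<m. l \<noteq> i \<longrightarrow> (\<forall>y\<in>K l. 1 / real (Suc (Suc n)) < dist x y)"
        using x(2) le by (meson le_less_trans)
      thus "x \<in> U i (Suc n)" using x(1) by (simp add: U_def)
    qed
  qed
  have UN: "(\<Union>n. U i n) = G i \<inter> K i" if i: "i < m" for i
  proof
    show "(\<Union>n. U i n) \<subseteq> G i \<inter> K i" unfolding U_def by blast
    show "G i \<inter> K i \<subseteq> (\<Union>n. U i n)"
    proof
      fix x assume x: "x \<in> G i \<inter> K i"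
      have "\<forall>l\<in>{..<m}. eventually (\<lambda>n. l \<noteq> i \<longrightarrow> (\<forall>y\<in>K l. 1 / real (Suc n) < dist x y)) sequentially"
      proof
        fix l assume l: "l \<in> {..<m}"
        show "eventually (\<lambda>n. l \<noteq> i \<longrightarrow> (\<forall>y\<in>K l. 1 / real (Suc n) < dist x y)) sequentially"
        proof (cases "l = i")
          case True thus ?thesis by simp
        next
          case False
          have lm: "l < m" using l by simp
          have "x \<in> Dd i" using x GD[OF i] by blast
          moreover have "Dd i \<inter> Dd l = {}" using Ddisj[OF i lm] False by auto
          moreover have "K l \<subseteq> Dd l" by (rule K(2)[OF lm])
          ultimately have "x \<in> - K l" by blast
          moreover have "open (- K l)" using K(1)[OF lm] by auto
          ultimately obtain r where r: "r > 0" "ball x r \<subseteq> - K l" by (meson open_contains_ball)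
          have rr: "\<forall>y\<in>K l. r \<le> dist x y"
          proof
            fix y assume "y \<in> K l"
            hence "y \<notin> ball x r" using r(2) by blast
            thus "r \<le> dist x y" by (simp add: not_less)
          qed
          obtain N :: nat where N: "1 / real (Suc N) < r" using r(1) by (metis nat_approx_posE of_nat_Suc)
          show ?thesis
          proof (rule eventually_sequentiallyI[of N])
            fix n assume "N \<le> n"
            hence "1 / real (Suc n) \<le> 1 / real (Suc N)" by (intro divide_left_mono) auto
            hence "\<forall>y\<in>K l. 1 / real (Suc n) < dist x y" using N rr by (meson le_less_trans less_le_trans)
            thus "l \<noteq> i \<longrightarrow> (\<forall>y\<in>K l. 1 / real (Suc n) < dist x y)" by blast
          qed
        qed
      qed
      hence "eventually (\<lambda>n. \<forall>l\<in>{..<m}. l \<noteq> i \<longrightarrow> (\<forall>y\<in>K l. 1 / real (Suc n) < dist x y)) sequentially"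
        by (intro eventually_ball_finite) auto
      then obtain N where "\<forall>n\<ge>N. \<forall>l\<in>{..<m}. l \<noteq> i \<longrightarrow> (\<forall>y\<in>K l. 1 / real (Suc n) < dist x y)"
        unfolding eventually_sequentially by (elim exE)
      hence "\<forall>l\<in>{..<m}. l \<noteq> i \<longrightarrow> (\<forall>y\<in>K l. 1 / real (Suc N) < dist x y)" by (elim allE impE) simp_all
      hence "x \<in> U i N" using x by (simp add: U_def)
      thus "x \<in> (\<Union>n. U i n)" by blast
    qed
  qed
  have lim: "(\<Sum>i<m. ennreal (C i) * P (G i \<inter> K i)) \<le> s"
  proof -
    have "(\<Sum>i<m. ennreal (C i) * P (G i \<inter> K i)) = (\<Sum>i<m. SUP n. ennreal (C i) * P (U i n))"
    proof (rule sum.cong)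
      fix i assume "i \<in> {..<m}"
      hence "P (G i \<inter> K i) = (SUP n. P (U i n))" using UN[of i] P_incseq[OF inc[of i]] by simp
      thus "ennreal (C i) * P (G i \<inter> K i) = (SUP n. ennreal (C i) * P (U i n))"
        by (simp add: SUP_mult_left_ennreal)
    qed simp
    also have "\<dots> = (SUP n. \<Sum>i<m. ennreal (C i) * P (U i n))"
    proof (rule ennreal_SUP_sum[symmetric])
      fix i show "incseq (\<lambda>n. ennreal (C i) * P (U i n))"
        using inc[of i] by (auto simp: incseq_def intro!: mult_left_mono Pmeas_mono)
    qed
    also have "\<dots> \<le> s" by (rule SUP_least) (rule bound)
    finally show ?thesis .
  qed
  have Gi: "P (G i) \<le> P (G i \<inter> K i) + ennreal \<eta>0" if i: "i < m" for i
  proof -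
    have "P (G i) \<le> P (G i \<inter> K i) + P (G i - K i)"
      using P_subadd[of "G i \<inter> K i" "G i - K i"] by (simp add: Int_Diff_Un)
    moreover have "P (G i - K i) \<le> emeasure M (Dd i - K i)"
      using Db[OF i] K(1)[OF i] GD[OF i] by (intro P_le_M) auto
    moreover have "emeasure M (Dd i - K i) \<le> ennreal \<eta>0" using K(3)[OF i] by simp
    ultimately show ?thesis by (meson add_left_mono order_trans)
  qed
  let ?A = "(\<Sum>i<m. ennreal (C i) * P (G i \<inter> K i))"
  have s1: "(\<Sum>i<m. ennreal (C i) * P (G i)) \<le> (\<Sum>i<m. ennreal (C i) * (P (G i \<inter> K i) + ennreal \<eta>0))"
    by (intro sum_mono mult_left_mono Gi) auto
  have s2: "(\<Sum>i<m. ennreal (C i) * (P (G i \<inter> K i) + ennreal \<eta>0)) = ?A + (\<Sum>i<m. ennreal (C i) * ennreal \<eta>0)"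
    by (simp add: distrib_left sum.distrib)
  have s3: "(\<Sum>i<m. ennreal (C i) * ennreal \<eta>0) = ennreal ((\<Sum>i<m. C i) * \<eta>0)"
  proof -
    have "(\<Sum>i<m. ennreal (C i) * ennreal \<eta>0) = (\<Sum>i<m. ennreal (C i * \<eta>0))"
      using Cnn \<eta>0 by (intro sum.cong) (auto simp: ennreal_mult)
    also have "\<dots> = ennreal (\<Sum>i<m. C i * \<eta>0)" using Cnn \<eta>0 by (intro sum_ennreal) auto
    finally show ?thesis by (simp add: sum_distrib_right)
  qed
  have s4: "ennreal ((\<Sum>i<m. C i) * \<eta>0) \<le> ennreal e"
  proof (rule ennreal_leI)
    have "(\<Sum>i<m. C i) * \<eta>0 = e * ((\<Sum>i<m. C i) / (1 + (\<Sum>i<m. C i)))"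
      unfolding \<eta>0_def by simp
    also have "\<dots> \<le> e * 1" using sumC e by (intro mult_left_mono) auto
    finally show "(\<Sum>i<m. C i) * \<eta>0 \<le> e" by simp
  qed
  have "?A + (\<Sum>i<m. ennreal (C i) * ennreal \<eta>0) \<le> s + ennreal e"
    unfolding s3 by (rule add_mono[OF lim s4])
  with s1 s2 show "(\<Sum>i<m. ennreal (C i) * P (G i)) \<le> s + ennreal e" by simp
qed

end


context pm begin

lemma CL:
  fixes m :: nat and B :: "nat \<Rightarrow> 'a set" and c :: "nat \<Rightarrow> real" and u :: "'a \<Rightarrow> real"
  assumes nest: "\<And>i j. i \<le> j \<Longrightarrow> j < m \<Longrightarrow> B j \<subseteq> B i"
  and cpos: "\<And>i. i < m \<Longrightarrow> c i > 0"
  and uc: "\<And>x. (\<Sum>j\<in>{j. j < m \<and> x \<in> B j}. c j) \<le> u x"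
  and hnn: "\<And>t. t > 0 \<Longrightarrow> h t \<ge> 0"
  and \<delta>1: "\<delta>1 > 0"
  and Hyp: "\<And>\<pi>. finite \<pi> \<Longrightarrow> packing dist \<pi> \<Longrightarrow> snd ` \<pi> \<subseteq> \<Delta> \<Longrightarrow> (\<forall>p\<in>\<pi>. snd p \<le> \<delta>1) \<Longrightarrow>
      (\<Sum>p\<in>\<pi>. ennreal (u (fst p) * h (snd p))) \<le> s"
  shows "(\<Sum>j<m. ennreal (c j) * P (B j)) \<le> s"
proof (cases "s = \<infinity>")
  case True thus ?thesis by simp
next
  case False
  have ucj: "c j \<le> u x" if "j < m" "x \<in> B j" for j x
  proof -
    have "c j = (\<Sum>i\<in>{j}. c i)" by simp
    also have "\<dots> \<le> (\<Sum>i\<in>{j. j < m \<and> x \<in> B j}. c i)"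
      using that cpos by (intro sum_mono2) (auto intro: less_imp_le)
    also have "\<dots> \<le> u x" by (rule uc)
    finally show ?thesis .
  qed
  have Pfin: "P (B j) < \<infinity>" if j: "j < m" for j
  proof -
    have "(\<Sum>i<(1::nat). ennreal (c j) * P (B j)) \<le> s"
    proof (rule sep_sets[where \<eta>=1 and u=u and C="\<lambda>_. c j" and S="\<lambda>_. B j" and m=1])
      show "\<And>i. i < 1 \<Longrightarrow> c j \<ge> 0" using cpos[OF j] by simp
      show "\<And>i x. i < 1 \<Longrightarrow> x \<in> B j \<Longrightarrow> c j \<le> u x" using ucj[OF j] by blast
      show "\<And>t. t > 0 \<Longrightarrow> h t \<ge> 0" by (rule hnn)
      show "\<And>(i::nat) (k::nat) x y. i < 1 \<Longrightarrow> k < 1 \<Longrightarrow> i \<noteq> k \<Longrightarrow> x \<in> B j \<Longrightarrow> y \<in> B j \<Longrightarrow> 1 < dist x y" by simp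
      show "(1::real) > 0" by simp
      show "\<delta>1 > 0" by (rule \<delta>1)
    qed (rule Hyp)
    hence "ennreal (c j) * P (B j) < \<infinity>" using False by (simp add: top.not_eq_extremum le_less_trans)
    thus ?thesis using cpos[OF j] by (auto simp: ennreal_mult_less_top)
  qed
  have "\<forall>j. \<exists>H\<in>sets borel. B j \<subseteq> H \<and> emeasure M H = P (B j)" using hullM by blast
  then obtain H where H: "\<And>j. H j \<in> sets borel" "\<And>j. B j \<subseteq> H j" "\<And>j. emeasure M (H j) = P (B j)"
    by metis
  define H' where "H' j = (if j < m then (\<Inter>i\<in>{..j}. H i) else {})" for j
  define Dd where "Dd j = H' j - H' (Suc j)" for j
  define G where "G j = B j \<inter> Dd j" for j
  have H'b: "H' j \<in> sets borel" for j unfolding H'_def using H(1) by auto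
  have Ddb: "Dd j \<in> sets borel" for j unfolding Dd_def using H'b by auto
  have BH': "B j \<subseteq> H' j" if "j < m" for j
    unfolding H'_def using that H(2) nest by fastforce
  have H'mono: "H' j \<subseteq> H' i" if "i \<le> j" for i j
    unfolding H'_def using that by auto
  have MH': "emeasure M (H' j) = P (B j)" if j: "j < m" for j
  proof (rule antisym)
    have "emeasure M (H' j) \<le> emeasure M (H j)"
      using H'b H(1) sets_M j by (intro emeasure_mono) (auto simp: H'_def)
    thus "emeasure M (H' j) \<le> P (B j)" using H(3) by simp
    show "P (B j) \<le> emeasure M (H' j)" using H'b BH'[OF j] by (intro P_le_M)
  qed
  have Ddisj: "Dd i \<inter> Dd j = {}" if "i \<noteq> j" for i j
  proof -
    { fix i j :: nat assume "i < j"
      hence "Dd j \<subseteq> H' (Suc i)" unfolding Dd_def using H'mono[of "Suc i" j] by auto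
      hence "Dd i \<inter> Dd j = {}" unfolding Dd_def by auto }
    thus ?thesis using that by (metis Int_commute linorder_neqE_nat)
  qed
  have Dfin: "emeasure M (Dd j) < \<infinity>" if j: "j < m" for j
  proof -
    have "emeasure M (Dd j) \<le> emeasure M (H' j)"
      using Ddb H'b sets_M by (intro emeasure_mono) (auto simp: Dd_def)
    thus ?thesis using MH'[OF j] Pfin[OF j] by (simp add: le_less_trans)
  qed
  have MDG: "emeasure M (Dd j) \<le> P (G j)" if j: "j < m" for j
  proof -
    have "emeasure M (H' j) = emeasure M (Dd j) + emeasure M (H' (Suc j))"
    proof -
      have "H' j = Dd j \<union> H' (Suc j)" unfolding Dd_def using H'mono[of j "Suc j"] by auto
      moreover have "Dd j \<inter> H' (Suc j) = {}" unfolding Dd_def by auto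
      ultimately show ?thesis using Ddb H'b sets_M by (simp add: plus_emeasure)
    qed
    moreover have "P (B j) \<le> P (G j) + emeasure M (H' (Suc j))"
    proof -
      have "B j = G j \<union> (B j \<inter> H' (Suc j))" unfolding G_def Dd_def using BH'[OF j] by auto
      hence "P (B j) \<le> P (G j) + P (B j \<inter> H' (Suc j))" using P_subadd by metis
      also have "P (B j \<inter> H' (Suc j)) \<le> emeasure M (H' (Suc j))" using H'b by (intro P_le_M) auto
      hence "P (G j) + P (B j \<inter> H' (Suc j)) \<le> P (G j) + emeasure M (H' (Suc j))" by (rule add_left_mono)
      finally show ?thesis .
    qed
    moreover have "emeasure M (H' (Suc j)) < \<infinity>"
    proof -
      have "emeasure M (H' (Suc j)) \<le> emeasure M (H' j)"
        using H'b sets_M H'mono[of j "Suc j"] by (intro emeasure_mono) auto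
      thus ?thesis using MH'[OF j] Pfin[OF j] by (simp add: le_less_trans)
    qed
    ultimately have "emeasure M (H' (Suc j)) + emeasure M (Dd j) \<le> emeasure M (H' (Suc j)) + P (G j)"
      using MH'[OF j] by (simp add: add.commute)
    thus ?thesis using \<open>emeasure M (H' (Suc j)) < \<infinity>\<close> by (auto simp: ennreal_add_left_cancel_le)
  qed
  have H'sum: "emeasure M (H' j) = (\<Sum>i\<in>{j..<m}. emeasure M (Dd i))" if j: "j < m" for j
  proof -
    have "H' j = (\<Union>i\<in>{j..<m}. Dd i)"
    proof
      show "(\<Union>i\<in>{j..<m}. Dd i) \<subseteq> H' j" unfolding Dd_def using H'mono by fastforce
      show "H' j \<subseteq> (\<Union>i\<in>{j..<m}. Dd i)"
      proof
        fix x assume x: "x \<in> H' j"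
        define I where "I = {i. j \<le> i \<and> i < m \<and> x \<in> H' i}"
        have "finite I" unfolding I_def by auto
        moreover have "j \<in> I" unfolding I_def using x j by auto
        ultimately have mI: "Max I \<in> I" and Mx: "\<And>i. i \<in> I \<Longrightarrow> i \<le> Max I" by (auto intro: Max_in Max_ge)
        have "x \<notin> H' (Suc (Max I))"
        proof
          assume xs: "x \<in> H' (Suc (Max I))"
          hence "Suc (Max I) < m" unfolding H'_def by (auto split: if_splits)
          hence "Suc (Max I) \<in> I" using xs mI unfolding I_def by auto
          thus False using Mx by fastforce
        qed
        hence "x \<in> Dd (Max I)" using mI unfolding Dd_def I_def by auto
        moreover have "Max I \<in> {j..<m}" using mI unfolding I_def by auto
        ultimately show "x \<in> (\<Union>i\<in>{j..<m}. Dd i)" by blast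
      qed
    qed
    hence "emeasure M (H' j) = emeasure M (\<Union>i\<in>{j..<m}. Dd i)" by simp
    also have "\<dots> = (\<Sum>i\<in>{j..<m}. emeasure M (Dd i))"
      using Ddb sets_M Ddisj by (intro sum_emeasure[symmetric]) (auto simp: disjoint_family_on_def)
    finally show ?thesis .
  qed
  define C where "C i = (\<Sum>j\<le>i. c j)" for i
  have Cnn: "C i \<ge> 0" if "i < m" for i unfolding C_def using that cpos by (intro sum_nonneg) (auto intro: less_imp_le)
  have uC: "C i \<le> u x" if i: "i < m" and x: "x \<in> G i" for i x
  proof -
    have "C i \<le> (\<Sum>j\<in>{j. j < m \<and> x \<in> B j}. c j)"
      unfolding C_def
    proof (rule sum_mono2)
      show "finite {j. j < m \<and> x \<in> B j}" by auto
      show "{..i} \<subseteq> {j. j < m \<and> x \<in> B j}"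
      proof
        fix j assume "j \<in> {..i}"
        hence "j \<le> i" by simp
        moreover have "x \<in> B i" using x unfolding G_def by auto
        ultimately show "j \<in> {j. j < m \<and> x \<in> B j}" using nest[of j i] i by auto
      qed
      show "\<And>b. b \<in> {j. j < m \<and> x \<in> B j} - {..i} \<Longrightarrow> 0 \<le> c b" using cpos by (auto intro: less_imp_le)
    qed
    also have "\<dots> \<le> u x" by (rule uc)
    finally show ?thesis .
  qed
  have "(\<Sum>j<m. ennreal (c j) * P (B j)) = (\<Sum>j<m. ennreal (c j) * (\<Sum>i\<in>{j..<m}. emeasure M (Dd i)))"
    by (intro sum.cong refl) (simp add: MH'[symmetric] H'sum)
  also have "\<dots> = (\<Sum>j<m. \<Sum>i<m. if j \<le> i then ennreal (c j) * emeasure M (Dd i) else 0)"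
  proof (intro sum.cong refl)
    fix j assume "j \<in> {..<m}"
    have "{j..<m} = {i \<in> {..<m}. j \<le> i}" by auto
    hence "(\<Sum>i\<in>{j..<m}. emeasure M (Dd i)) = (\<Sum>i\<in>{i \<in> {..<m}. j \<le> i}. emeasure M (Dd i))" by simp
    also have "\<dots> = (\<Sum>i<m. if j \<le> i then emeasure M (Dd i) else 0)"
      by (rule sum.inter_filter) simp
    finally have "(\<Sum>i\<in>{j..<m}. emeasure M (Dd i)) = (\<Sum>i<m. if j \<le> i then emeasure M (Dd i) else 0)" .
    hence "ennreal (c j) * (\<Sum>i\<in>{j..<m}. emeasure M (Dd i)) = (\<Sum>i<m. ennreal (c j) * (if j \<le> i then emeasure M (Dd i) else 0))"
      by (simp only: sum_distrib_left)
    also have "\<dots> = (\<Sum>i<m. if j \<le> i then ennreal (c j) * emeasure M (Dd i) else 0)"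
      by (intro sum.cong) auto
    finally show "ennreal (c j) * (\<Sum>i\<in>{j..<m}. emeasure M (Dd i)) = (\<Sum>i<m. if j \<le> i then ennreal (c j) * emeasure M (Dd i) else 0)" .
  qed
  also have "\<dots> = (\<Sum>i<m. \<Sum>j<m. if j \<le> i then ennreal (c j) * emeasure M (Dd i) else 0)"
    by (rule sum.swap)
  also have "\<dots> = (\<Sum>i<m. ennreal (C i) * emeasure M (Dd i))"
  proof (intro sum.cong refl)
    fix i assume i: "i \<in> {..<m}"
    have eqs: "{..i} = {j \<in> {..<m}. j \<le> i}" using i by auto
    have "(\<Sum>j<m. if j \<le> i then ennreal (c j) * emeasure M (Dd i) else 0) = (\<Sum>j\<in>{j \<in> {..<m}. j \<le> i}. ennreal (c j) * emeasure M (Dd i))"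
      by (rule sum.inter_filter[symmetric]) simp
    also have "\<dots> = (\<Sum>j\<le>i. ennreal (c j) * emeasure M (Dd i))" unfolding eqs ..
    also have "\<dots> = (\<Sum>j\<le>i. ennreal (c j)) * emeasure M (Dd i)" by (simp add: sum_distrib_right)
    also have "(\<Sum>j\<le>i. ennreal (c j)) = ennreal (C i)"
      unfolding C_def using cpos i by (intro sum_ennreal) (auto intro: less_imp_le)
    finally show "(\<Sum>j<m. if j \<le> i then ennreal (c j) * emeasure M (Dd i) else 0) = ennreal (C i) * emeasure M (Dd i)" .
  qed
  also have "\<dots> \<le> (\<Sum>i<m. ennreal (C i) * P (G i))"
    by (intro sum_mono mult_left_mono MDG) auto
  also have "\<dots> \<le> s"
  proof (rule sep[where Dd=Dd and u=u])
    show "\<And>i. i < m \<Longrightarrow> Dd i \<in> sets borel" by (rule Ddb)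
    show "\<And>i j. i < m \<Longrightarrow> j < m \<Longrightarrow> i \<noteq> j \<Longrightarrow> Dd i \<inter> Dd j = {}" using Ddisj by blast
    show "\<And>i. i < m \<Longrightarrow> emeasure M (Dd i) < \<infinity>" by (rule Dfin)
    show "\<And>i. i < m \<Longrightarrow> G i \<subseteq> Dd i" unfolding G_def by blast
    show "\<And>i. i < m \<Longrightarrow> C i \<ge> 0" by (rule Cnn)
    show "\<And>i x. i < m \<Longrightarrow> x \<in> G i \<Longrightarrow> C i \<le> u x" by (rule uC)
    show "\<And>t. t > 0 \<Longrightarrow> h t \<ge> 0" by (rule hnn)
    show "\<delta>1 > 0" by (rule \<delta>1)
  qed (rule Hyp)
  finally show ?thesis .
qed

end


lemma gap_mono: "F' \<subseteq> F \<Longrightarrow> gap d F \<le> gap d F'"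
  unfolding gap_def by (rule INF_superset_mono) auto

lemma gap_le: "x \<in> F \<Longrightarrow> y \<in> F \<Longrightarrow> x \<noteq> y \<Longrightarrow> gap d F \<le> ennreal (d x y)"
  unfolding gap_def by (rule INF_lower2[where i="(x,y)"]) auto

lemma choose_F:
  fixes S :: "'b set" and d :: "'b \<Rightarrow> 'b \<Rightarrow> real"
  assumes G: "G > 0" and r: "r \<ge> 0" and t: "t \<ge> 0"
    and lt: "ennreal t < Cdelta d r S * ennreal G"
  shows "\<exists>F. finite F \<and> F \<subseteq> S \<and> gap d F > ennreal r \<and> t \<le> real (card F) * G"
proof -
  have "Cdelta d r S * ennreal G = (SUP F\<in>{F. F \<subseteq> S \<and> gap d F > ennreal r}. ecard F * ennreal G)"
    unfolding Cdelta_def by (rule SUP_mult_right_ennreal)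
  with lt obtain F where F: "F \<subseteq> S" "gap d F > ennreal r" "ennreal t < ecard F * ennreal G"
    by (auto simp: less_SUP_iff)
  show ?thesis
  proof (cases "finite F")
    case True
    hence "ennreal t < ennreal (real (card F) * G)"
      using F(3) G by (simp add: ecard_def ennreal_of_nat_eq_real_of_nat ennreal_mult)
    hence "t < real (card F) * G" using t by (simp add: ennreal_less_iff)
    thus ?thesis using True F by (intro exI[of _ F]) auto
  next
    case False
    define n where "n = nat (ceiling (t / G))"
    obtain F' where F': "finite F'" "card F' = n" "F' \<subseteq> F" using infinite_arbitrarily_large[OF False] by blast
    have "t / G \<le> real n" unfolding n_def by linarith
    hence "t \<le> real n * G" using G by (simp add: field_simps)
    moreover have "gap d F' > ennreal r" using gap_mono[OF F'(3), of d] F(2) by simp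
    ultimately show ?thesis using F' F(1) by (intro exI[of _ F']) auto
  qed
qed

lemma PF:
  fixes E :: "('a::metric_space \<times> 'b::metric_space) set" and \<pi> :: "('a \<times> real) set"
  assumes gpos: "\<And>t. t > 0 \<Longrightarrow> g t > 0" and hpos: "\<And>t. t > 0 \<Longrightarrow> h t > 0"
  and bnd: "\<And>\<pi>'. finite \<pi>' \<Longrightarrow> packing dmax \<pi>' \<Longrightarrow> fst ` \<pi>' \<subseteq> E \<Longrightarrow> snd ` \<pi>' \<subseteq> \<Delta> \<Longrightarrow> (\<forall>p\<in>\<pi>'. snd p \<le> \<delta>1)
      \<Longrightarrow> (\<Sum>p\<in>\<pi>'. ennreal (g (snd p) * h (snd p))) \<le> s"
  and fin: "finite \<pi>" and pk: "packing dist \<pi>" and D: "snd ` \<pi> \<subseteq> \<Delta>" and fine: "\<forall>p\<in>\<pi>. snd p \<le> \<delta>1"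
  and \<tau>0: "\<And>p. p \<in> \<pi> \<Longrightarrow> \<tau> p \<ge> 0"
  and \<tau>: "\<And>p. p \<in> \<pi> \<Longrightarrow> \<tau> p = 0 \<or> ennreal (\<tau> p) < Cdelta dist (snd p) (xsection E (fst p)) * ennreal (g (snd p))"
  shows "(\<Sum>p\<in>\<pi>. ennreal (\<tau> p * h (snd p))) \<le> s"
proof -
  have sp: "snd p > 0" if "p \<in> \<pi>" for p using pk that unfolding packing_def by blast
  have "\<forall>p\<in>\<pi>. \<exists>F. finite F \<and> F \<subseteq> xsection E (fst p) \<and> gap dist F > ennreal (snd p) \<and> \<tau> p \<le> real (card F) * g (snd p)"
  proof
    fix p assume p: "p \<in> \<pi>"
    show "\<exists>F. finite F \<and> F \<subseteq> xsection E (fst p) \<and> gap dist F > ennreal (snd p) \<and> \<tau> p \<le> real (card F) * g (snd p)"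
    proof (cases "\<tau> p = 0")
      case True
      have "gap dist ({} :: 'b set) = \<infinity>" unfolding gap_def by simp
      thus ?thesis using True by (intro exI[of _ "{}"]) auto
    next
      case False
      hence lt: "ennreal (\<tau> p) < Cdelta dist (snd p) (xsection E (fst p)) * ennreal (g (snd p))"
        using \<tau>[OF p] by blast
      show ?thesis
        by (rule choose_F[where G="g (snd p)" and r="snd p" and t="\<tau> p" and d=dist and S="xsection E (fst p)",
            OF gpos[OF sp[OF p]] less_imp_le[OF sp[OF p]] \<tau>0[OF p] lt])
    qed
  qed
  then obtain F where F: "\<And>p. p \<in> \<pi> \<Longrightarrow> finite (F p)" "\<And>p. p \<in> \<pi> \<Longrightarrow> F p \<subseteq> xsection E (fst p)"
    "\<And>p. p \<in> \<pi> \<Longrightarrow> gap dist (F p) > ennreal (snd p)" "\<And>p. p \<in> \<pi> \<Longrightarrow> \<tau> p \<le> real (card (F p)) * g (snd p)"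
    by metis
  define lift where "lift p = (\<lambda>y::'b. ((fst p, y), snd p))" for p :: "'a \<times> real"
  define \<pi>' where "\<pi>' = (\<Union>p\<in>\<pi>. lift p ` F p)"
  have dmax_ge: "dist (fst a) (fst b) \<le> dmax a b" "dist (snd a) (snd b) \<le> dmax a b" for a b :: "'a \<times> 'b"
    unfolding dmax_def by auto
  have pk': "packing dmax \<pi>'" unfolding packing_def
  proof (intro conjI ballI impI)
    fix a assume "a \<in> \<pi>'" then obtain p y where "p \<in> \<pi>" "a = lift p y" unfolding \<pi>'_def by blast
    thus "snd a > 0" using sp unfolding lift_def by simp
  next
    fix a b assume "a \<in> \<pi>'" "b \<in> \<pi>'" "a \<noteq> b"
    then obtain p y q z where pq: "p \<in> \<pi>" "y \<in> F p" "a = lift p y" "q \<in> \<pi>" "z \<in> F q" "b = lift q z"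
      unfolding \<pi>'_def by blast
    show "dmax (fst a) (fst b) > snd a"
    proof (cases "p = q")
      case True
      hence "y \<noteq> z" using pq \<open>a \<noteq> b\<close> by auto
      hence "gap dist (F p) \<le> ennreal (dist y z)" using pq True by (intro gap_le) auto
      hence "ennreal (snd p) < ennreal (dist y z)" using F(3)[OF pq(1)] by simp
      hence "snd p < dist y z" using sp[OF pq(1)] by (simp add: ennreal_less_iff)
      moreover have "dist y z \<le> dmax (fst a) (fst b)" using dmax_ge(2)[of "fst a" "fst b"] pq True unfolding lift_def by simp
      ultimately show ?thesis using pq unfolding lift_def by simp
    next
      case False
      hence "dist (fst p) (fst q) > snd p" using pk pq unfolding packing_def by blast
      moreover have "dist (fst p) (fst q) \<le> dmax (fst a) (fst b)" using dmax_ge(1)[of "fst a" "fst b"] pq unfolding lift_def by simp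
      ultimately show ?thesis using pq unfolding lift_def by simp
    qed
  qed
  have fin': "finite \<pi>'" unfolding \<pi>'_def using fin F(1) by auto
  have E': "fst ` \<pi>' \<subseteq> E"
  proof
    fix a assume "a \<in> fst ` \<pi>'"
    then obtain p y where "p \<in> \<pi>" "y \<in> F p" "a = (fst p, y)" unfolding \<pi>'_def lift_def by auto
    thus "a \<in> E" using F(2) unfolding xsection_def by blast
  qed
  have D': "snd ` \<pi>' \<subseteq> \<Delta>" unfolding \<pi>'_def lift_def using D by auto
  have fine': "\<forall>p\<in>\<pi>'. snd p \<le> \<delta>1" unfolding \<pi>'_def lift_def using fine by auto
  have injl: "inj_on (lift p) (F p)" for p unfolding lift_def inj_on_def by auto
  have disj: "lift p ` F p \<inter> lift q ` F q = {}" if "p \<in> \<pi>" "q \<in> \<pi>" "p \<noteq> q" for p q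
    using that unfolding lift_def by (auto simp: prod_eq_iff)
  have "(\<Sum>p\<in>\<pi>. ennreal (\<tau> p * h (snd p))) \<le> (\<Sum>p\<in>\<pi>. \<Sum>a\<in>lift p ` F p. ennreal (g (snd a) * h (snd a)))"
  proof (rule sum_mono)
    fix p assume p: "p \<in> \<pi>"
    have "(\<Sum>a\<in>lift p ` F p. ennreal (g (snd a) * h (snd a))) = (\<Sum>y\<in>F p. ennreal (g (snd p) * h (snd p)))"
      using injl[of p] by (simp add: sum.reindex lift_def)
    also have "\<dots> = ennreal (real (card (F p)) * (g (snd p) * h (snd p)))"
      using gpos[OF sp[OF p]] hpos[OF sp[OF p]]
      by (simp add: ennreal_of_nat_eq_real_of_nat ennreal_mult)
    finally have eq: "(\<Sum>a\<in>lift p ` F p. ennreal (g (snd a) * h (snd a))) = ennreal (real (card (F p)) * (g (snd p) * h (snd p)))" .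
    have "\<tau> p * h (snd p) \<le> real (card (F p)) * g (snd p) * h (snd p)"
      using F(4)[OF p] hpos[OF sp[OF p]] by (intro mult_right_mono) auto
    thus "ennreal (\<tau> p * h (snd p)) \<le> (\<Sum>a\<in>lift p ` F p. ennreal (g (snd a) * h (snd a)))"
      unfolding eq by (intro ennreal_leI) (simp add: mult.assoc)
  qed
  also have "\<dots> = (\<Sum>a\<in>\<pi>'. ennreal (g (snd a) * h (snd a)))"
    unfolding \<pi>'_def
  proof (rule sum.UNION_disjoint[symmetric])
    show "finite \<pi>" by (rule fin)
    show "\<forall>p\<in>\<pi>. finite (lift p ` F p)" using F(1) by blast
    show "\<forall>p\<in>\<pi>. \<forall>q\<in>\<pi>. p \<noteq> q \<longrightarrow> lift p ` F p \<inter> lift q ` F q = {}" using disj by blast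
  qed
  also have "\<dots> \<le> s" by (rule bnd[OF fin' pk' E' D' fine'])
  finally show ?thesis .
qed


definition lev :: "real \<Rightarrow> int \<Rightarrow> real" where "lev \<rho> k = \<rho> powr (real_of_int k)"

lemma lev_pos: "\<rho> > 1 \<Longrightarrow> lev \<rho> k > 0" unfolding lev_def by simp

lemma lev_Suc: "\<rho> > 1 \<Longrightarrow> lev \<rho> (k + 1) = \<rho> * lev \<rho> k"
  unfolding lev_def by (simp add: powr_add)

lemma lev_less_iff: "\<rho> > 1 \<Longrightarrow> lev \<rho> k < lev \<rho> l \<longleftrightarrow> k < l"
  unfolding lev_def by simp

lemma lev_le_iff: "\<rho> > 1 \<Longrightarrow> lev \<rho> k \<le> lev \<rho> l \<longleftrightarrow> k \<le> l"
  using lev_less_iff[of \<rho> l k] by (simp add: not_less[symmetric])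

lemma lev_nat: "\<rho> > 1 \<Longrightarrow> lev \<rho> (int n) = \<rho> ^ n"
  unfolding lev_def by (simp add: powr_realpow)

lemma lev_tele:
  assumes "\<rho> > 1" "- int N \<le> k"
  shows "(\<Sum>l\<in>{- int N..k}. lev \<rho> l - lev \<rho> (l - 1)) = lev \<rho> k - lev \<rho> (- int N - 1)"
  using assms(2)
proof (induction k rule: int_ge_induct)
  case base thus ?case by simp
next
  case (step k)
  have "{- int N..k + 1} = insert (k + 1) {- int N..k}" using step.hyps by auto
  hence "(\<Sum>l\<in>{- int N..k+1}. lev \<rho> l - lev \<rho> (l - 1)) = (lev \<rho> (k+1) - lev \<rho> k) + (\<Sum>l\<in>{- int N..k}. lev \<rho> l - lev \<rho> (l - 1))"
    by simp
  thus ?case using step.IH by simp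
qed

lemma lev_small: "\<rho> > 1 \<Longrightarrow> \<epsilon> > 0 \<Longrightarrow> \<exists>N::nat. lev \<rho> (- int N) < \<epsilon>"
proof -
  assume r: "\<rho> > 1" and e: "\<epsilon> > 0"
  obtain N where N: "1 / \<epsilon> < \<rho> ^ N" using real_arch_pow[OF r] by blast
  have "lev \<rho> (- int N) = 1 / \<rho> ^ N"
    unfolding lev_def using r by (simp add: powr_minus powr_realpow divide_inverse)
  also have "\<dots> < \<epsilon>" using N e r by (simp add: field_simps)
  finally show ?thesis by blast
qed

lemma lev_large: "\<rho> > 1 \<Longrightarrow> \<exists>n::nat. R < lev \<rho> (int n)"
  using real_arch_pow[of \<rho> R] lev_nat by auto

lemma lev_bracket:
  assumes r: "\<rho> > 1" and y: "y > 0"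
  shows "\<exists>k. lev \<rho> k < y \<and> y \<le> lev \<rho> (k + 1)"
proof -
  define k where "k = ceiling (log \<rho> y) - 1"
  have "lev \<rho> (k + 1) = \<rho> powr (real_of_int (ceiling (log \<rho> y)))" unfolding lev_def k_def by simp
  also have "\<dots> \<ge> \<rho> powr (log \<rho> y)" using r by (intro powr_mono) auto
  finally have 1: "y \<le> lev \<rho> (k + 1)" using r y by simp
  have "lev \<rho> k = \<rho> powr (real_of_int (ceiling (log \<rho> y)) - 1)" unfolding lev_def k_def by simp
  also have "\<dots> < \<rho> powr (log \<rho> y)" using r by (subst powr_less_cancel_iff) linarith+
  finally have 2: "lev \<rho> k < y" using r y by simp
  from 1 2 show ?thesis by blast
qed


context pm begin

lemma main_bound:
  fixes E :: "('a \<times> 'b::metric_space) set" and g :: "real \<Rightarrow> real" and s \<rho> :: real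
  assumes gpos: "\<And>t. t > 0 \<Longrightarrow> g t > 0" and hpos: "\<And>t. t > 0 \<Longrightarrow> h t > 0"
  and S: "P0 dmax \<Delta> (\<lambda>t. g t * h t) E < ennreal s" and \<rho>: "\<rho> > 1"
  shows "upper_integral M (\<lambda>x. lowerB0 dist g (xsection E x)) \<le> ennreal (\<rho> * s)"
proof -
  define f where "f x = lowerB0 dist g (xsection E x)" for x
  define Cg where "Cg x \<delta> = Cdelta dist \<delta> (xsection E x) * ennreal (g \<delta>)" for x \<delta>
  have f_eq: "f x = Liminf (at_right 0) (Cg x)" for x unfolding f_def Cg_def lowerB0_def ..
  obtain \<delta>0 where \<delta>0: "\<delta>0 > 0" "SUPd dmax \<Delta> (\<lambda>t. g t * h t) E \<delta>0 < ennreal s"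
    using S unfolding P0_SUPd by (auto simp: INF_less_iff)
  have bnd: "(\<Sum>p\<in>\<pi>'. ennreal (g (snd p) * h (snd p))) \<le> ennreal s"
    if "finite \<pi>'" "packing dmax \<pi>'" "fst ` \<pi>' \<subseteq> E" "snd ` \<pi>' \<subseteq> \<Delta>" "\<forall>p\<in>\<pi>'. snd p \<le> \<delta>1" "\<delta>1 \<le> \<delta>0"
    for \<pi>' \<delta>1
  proof -
    have fine: "\<forall>p\<in>\<pi>'. snd p \<le> \<delta>0" using that(5,6) by force
    have "(\<Sum>p\<in>\<pi>'. ennreal ((\<lambda>t. g t * h t) (snd p))) \<le> SUPd dmax \<Delta> (\<lambda>t. g t * h t) E \<delta>0"
      unfolding SUPd_fin using that(1-4) fine by (intro SUP_upper) blast
    thus ?thesis using \<delta>0(2) by simp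
  qed
  define A where "A t n = {x. \<forall>\<delta>. 0 < \<delta> \<and> \<delta> < 1 / real (Suc n) \<longrightarrow> ennreal t < Cg x \<delta>}" for t n
  define Ai where "Ai t = (\<Union>n. A t n)" for t
  have A_anti: "A t n \<subseteq> A t' n" if "t' \<le> t" for t t' n
  proof
    fix x assume "x \<in> A t n"
    hence "\<forall>\<delta>. 0 < \<delta> \<and> \<delta> < 1 / real (Suc n) \<longrightarrow> ennreal t < Cg x \<delta>" unfolding A_def by simp
    moreover have "ennreal t' \<le> ennreal t" using that by (rule ennreal_leI)
    ultimately have "\<forall>\<delta>. 0 < \<delta> \<and> \<delta> < 1 / real (Suc n) \<longrightarrow> ennreal t' < Cg x \<delta>"
      by (meson le_less_trans)
    thus "x \<in> A t' n" unfolding A_def by simp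
  qed
  have A_inc: "incseq (A t)" for t
  proof (rule incseq_SucI)
    fix n
    have le: "1 / real (Suc (Suc n)) \<le> 1 / real (Suc n)" by (intro divide_left_mono) auto
    show "A t n \<subseteq> A t (Suc n)"
    proof
      fix x assume "x \<in> A t n"
      hence "\<forall>\<delta>. 0 < \<delta> \<and> \<delta> < 1 / real (Suc n) \<longrightarrow> ennreal t < Cg x \<delta>" unfolding A_def by simp
      hence "\<forall>\<delta>. 0 < \<delta> \<and> \<delta> < 1 / real (Suc (Suc n)) \<longrightarrow> ennreal t < Cg x \<delta>" using le by force
      thus "x \<in> A t (Suc n)" unfolding A_def by simp
    qed
  qed
  have f_A: "x \<in> Ai t" if "ennreal t < f x" for x t
  proof -
    have "eventually (\<lambda>\<delta>. ennreal t < Cg x \<delta>) (at_right (0::real))"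
      using that unfolding f_eq by (rule less_LiminfD)
    then obtain b :: real where b: "b > 0" "\<forall>\<delta>>0. \<delta> < b \<longrightarrow> ennreal t < Cg x \<delta>"
      unfolding eventually_at_right_field by blast
    obtain n :: nat where n: "1 / real (Suc n) < b" using b(1) by (metis nat_approx_posE of_nat_Suc)
    have "x \<in> A t n" unfolding A_def using b(2) n by force
    thus ?thesis unfolding Ai_def by blast
  qed
  define w where "w k = lev \<rho> k - lev \<rho> (k - 1)" for k
  have w_pos: "w k > 0" for k unfolding w_def using lev_less_iff[OF \<rho>, of "k-1" k] by simp
  have step4: "(\<Sum>j<m. ennreal (w (int j - int N)) * P (A (lev \<rho> (int j - int N)) n)) \<le> ennreal s"
    for m N n
  proof -
    define B where "B j = A (lev \<rho> (int j - int N)) n" for j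
    define c where "c j = w (int j - int N)" for j
    define u where "u x = (\<Sum>j\<in>{j. j < m \<and> x \<in> B j}. c j)" for x
    define \<delta>1 where "\<delta>1 = min \<delta>0 (1 / real (Suc (Suc n)))"
    have \<delta>1: "\<delta>1 > 0" "\<delta>1 \<le> \<delta>0" "\<delta>1 < 1 / real (Suc n)"
      unfolding \<delta>1_def using \<delta>0(1) by (auto simp: min_less_iff_disj divide_strict_left_mono)
    have nest: "B j \<subseteq> B i" if "i \<le> j" for i j
      unfolding B_def using that by (intro A_anti) (simp add: lev_le_iff[OF \<rho>])
    have u0: "u x \<ge> 0" for x unfolding u_def c_def using w_pos by (intro sum_nonneg) (auto intro: less_imp_le)
    have U: "u x = 0 \<or> x \<in> A (u x) n" for x
    proof (cases "{j. j < m \<and> x \<in> B j} = {}")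
      case True
      hence "u x = 0" unfolding u_def by (simp only: sum.empty)
      thus ?thesis by blast
    next
      case False
      define J where "J = {j. j < m \<and> x \<in> B j}"
      have finJ: "finite J" unfolding J_def by auto
      define jm where "jm = Max J"
      have "J \<noteq> {}" using False unfolding J_def .
      hence jmJ: "jm \<in> J" unfolding jm_def using finJ by (intro Max_in)
      have Jeq: "J = {..<Suc jm}"
      proof
        show "J \<subseteq> {..<Suc jm}" unfolding jm_def using finJ by (auto intro: Max_ge simp: less_Suc_eq_le)
        show "{..<Suc jm} \<subseteq> J"
        proof
          fix j assume "j \<in> {..<Suc jm}"
          hence "j \<le> jm" by simp
          moreover have "jm < m" "x \<in> B jm" using jmJ unfolding J_def by auto
          ultimately show "j \<in> J" unfolding J_def using nest[of j jm] by auto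
        qed
      qed
      define F where "F j = lev \<rho> (int j - int N - 1)" for j
      have cF: "c j = F (Suc j) - F j" for j unfolding c_def w_def F_def by simp
      have "u x = (\<Sum>j<Suc jm. F (Suc j) - F j)" unfolding u_def J_def[symmetric] Jeq cF ..
      also have "\<dots> = F (Suc jm) - F 0" by (rule sum_lessThan_telescope)
      also have "\<dots> \<le> lev \<rho> (int jm - int N)" unfolding F_def using lev_pos[OF \<rho>, of "- int N - 1"] by simp
      finally have "u x \<le> lev \<rho> (int jm - int N)" .
      moreover have "x \<in> B jm" using jmJ unfolding J_def by auto
      ultimately have "x \<in> A (u x) n" unfolding B_def using A_anti by blast
      thus ?thesis by blast
    qed
    have "(\<Sum>j<m. ennreal (c j) * P (B j)) \<le> ennreal s"
    proof (rule CL[where u=u])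
      show "\<And>i j. i \<le> j \<Longrightarrow> j < m \<Longrightarrow> B j \<subseteq> B i" using nest by blast
      show "\<And>i. i < m \<Longrightarrow> c i > 0" unfolding c_def by (rule w_pos)
      show "\<And>x. (\<Sum>j\<in>{j. j < m \<and> x \<in> B j}. c j) \<le> u x" unfolding u_def by simp
      show "\<And>t. t > 0 \<Longrightarrow> h t \<ge> 0" using hpos by (simp add: less_imp_le)
      show "\<delta>1 > 0" by (rule \<delta>1(1))
    next
      fix \<pi> :: "('a \<times> real) set"
      assume \<pi>: "finite \<pi>" "packing dist \<pi>" "snd ` \<pi> \<subseteq> \<Delta>" "\<forall>p\<in>\<pi>. snd p \<le> \<delta>1"
      show "(\<Sum>p\<in>\<pi>. ennreal (u (fst p) * h (snd p))) \<le> ennreal s"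
      proof (rule PF[where \<tau>="\<lambda>p. u (fst p)" and E=E and g=g])
        show "\<And>t. t > 0 \<Longrightarrow> g t > 0" by (rule gpos)
        show "\<And>t. t > 0 \<Longrightarrow> h t > 0" by (rule hpos)
        show "\<And>\<pi>'. finite \<pi>' \<Longrightarrow> packing dmax \<pi>' \<Longrightarrow> fst ` \<pi>' \<subseteq> E \<Longrightarrow> snd ` \<pi>' \<subseteq> \<Delta> \<Longrightarrow> (\<forall>p\<in>\<pi>'. snd p \<le> \<delta>1)
          \<Longrightarrow> (\<Sum>p\<in>\<pi>'. ennreal (g (snd p) * h (snd p))) \<le> ennreal s"
          using bnd \<delta>1(2) by blast
        show "finite \<pi>" "packing dist \<pi>" "snd ` \<pi> \<subseteq> \<Delta>" "\<forall>p\<in>\<pi>. snd p \<le> \<delta>1" by (fact \<pi>)+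
        show "\<And>p. p \<in> \<pi> \<Longrightarrow> u (fst p) \<ge> 0" by (rule u0)
        fix p assume p: "p \<in> \<pi>"
        have sp: "0 < snd p" using \<pi>(2) p unfolding packing_def by blast
        have "snd p < 1 / real (Suc n)" using \<pi>(4) p \<delta>1(3) by force
        thus "u (fst p) = 0 \<or> ennreal (u (fst p)) < Cdelta dist (snd p) (xsection E (fst p)) * ennreal (g (snd p))"
          using U[of "fst p"] sp unfolding A_def Cg_def by blast
      qed
    qed
    thus ?thesis unfolding B_def c_def .
  qed
  have step5: "(\<Sum>j<m. ennreal (w (int j - int N)) * P (Ai (lev \<rho> (int j - int N)))) \<le> ennreal s" for m N
  proof -
    have "(\<Sum>j<m. ennreal (w (int j - int N)) * P (Ai (lev \<rho> (int j - int N))))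
        = (\<Sum>j<m. SUP n. ennreal (w (int j - int N)) * P (A (lev \<rho> (int j - int N)) n))"
      unfolding Ai_def P_incseq[OF A_inc] by (simp add: SUP_mult_left_ennreal)
    also have "\<dots> = (SUP n. \<Sum>j<m. ennreal (w (int j - int N)) * P (A (lev \<rho> (int j - int N)) n))"
    proof (rule ennreal_SUP_sum[symmetric])
      fix j show "incseq (\<lambda>n. ennreal (w (int j - int N)) * P (A (lev \<rho> (int j - int N)) n))"
        using A_inc by (auto simp: incseq_def intro!: mult_left_mono Pmeas_mono)
    qed
    also have "\<dots> \<le> ennreal s" by (rule SUP_least) (rule step4)
    finally show ?thesis .
  qed
  define V where "V k = ennreal (w k) * P (Ai (lev \<rho> k))" for k
  have step6: "(\<Sum>k\<in>{- int N..int N}. V k) \<le> ennreal s" for N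
  proof -
    have inj: "inj_on (\<lambda>j. int j - int N) {..<2 * N + 1}" by (auto simp: inj_on_def)
    have img: "(\<lambda>j. int j - int N) ` {..<2 * N + 1} = {- int N..int N}"
    proof
      show "(\<lambda>j. int j - int N) ` {..<2 * N + 1} \<subseteq> {- int N..int N}" by auto
      show "{- int N..int N} \<subseteq> (\<lambda>j. int j - int N) ` {..<2 * N + 1}"
      proof
        fix k assume k: "k \<in> {- int N..int N}"
        hence "k = int (nat (k + int N)) - int N" "nat (k + int N) < 2 * N + 1" by auto
        thus "k \<in> (\<lambda>j. int j - int N) ` {..<2 * N + 1}" by blast
      qed
    qed
    have "(\<Sum>k\<in>{- int N..int N}. V k) = (\<Sum>j<2 * N + 1. V (int j - int N))"
      unfolding img[symmetric] by (subst sum.reindex[OF inj]) simp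
    also have "\<dots> \<le> ennreal s" unfolding V_def by (rule step5)
    finally show ?thesis .
  qed
  have "\<forall>k. \<exists>H\<in>sets borel. Ai (lev \<rho> k) \<subseteq> H \<and> emeasure M H = P (Ai (lev \<rho> k))" using hullM by blast
  then obtain Hk where Hk: "\<And>k. Hk k \<in> sets borel" "\<And>k. Ai (lev \<rho> k) \<subseteq> Hk k"
    "\<And>k. emeasure M (Hk k) = P (Ai (lev \<rho> k))" by metis
  have Hk_M[measurable]: "Hk k \<in> sets M" for k using Hk(1) sets_M by simp
  define \<psi> where "\<psi> N x = (\<Sum>k\<in>{- int N..int N}. ennreal (w k) * indicator (Hk k) x)" for N x
  define \<phi> where "\<phi> x = ennreal \<rho> * (SUP N. \<psi> N x)" for x
  have \<psi>_meas[measurable]: "\<psi> N \<in> borel_measurable M" for N unfolding \<psi>_def by measurable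
  have \<phi>_meas: "\<phi> \<in> borel_measurable M" unfolding \<phi>_def by measurable
  have \<psi>_inc: "incseq \<psi>"
  proof (rule incseq_SucI)
    fix N show "\<psi> N \<le> \<psi> (Suc N)"
      unfolding le_fun_def \<psi>_def by (intro allI sum_mono2) auto
  qed
  have int_\<psi>: "(\<integral>\<^sup>+x. \<psi> N x \<partial>M) = (\<Sum>k\<in>{- int N..int N}. V k)" for N
  proof -
    have "(\<integral>\<^sup>+x. \<psi> N x \<partial>M) = (\<Sum>k\<in>{- int N..int N}. \<integral>\<^sup>+x. ennreal (w k) * indicator (Hk k) x \<partial>M)"
      unfolding \<psi>_def by (rule nn_integral_sum) measurable
    also have "\<dots> = (\<Sum>k\<in>{- int N..int N}. V k)"
      by (intro sum.cong refl) (simp add: nn_integral_cmult_indicator Hk(3) V_def)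
    finally show ?thesis .
  qed
  have int_\<phi>: "(\<integral>\<^sup>+x. \<phi> x \<partial>M) \<le> ennreal (\<rho> * s)"
  proof -
    have "(\<integral>\<^sup>+x. \<phi> x \<partial>M) = ennreal \<rho> * (\<integral>\<^sup>+x. (SUP N. \<psi> N x) \<partial>M)"
      unfolding \<phi>_def by (rule nn_integral_cmult) measurable
    also have "(\<integral>\<^sup>+x. (SUP N. \<psi> N x) \<partial>M) = (SUP N. \<integral>\<^sup>+x. \<psi> N x \<partial>M)"
      by (rule nn_integral_monotone_convergence_SUP[OF \<psi>_inc]) measurable
    also have "\<dots> \<le> ennreal s" unfolding int_\<psi> by (rule SUP_least) (rule step6)
    finally have "(\<integral>\<^sup>+x. \<phi> x \<partial>M) \<le> ennreal \<rho> * ennreal s" by (simp add: mult_left_mono)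
    thus ?thesis using \<rho> ennreal_mult'[of \<rho> s] by simp
  qed
  have key: "ennreal (lev \<rho> k) \<le> (SUP N. \<psi> N x)" if H: "\<forall>l\<le>k. x \<in> Hk l" for x k
  proof (rule ennreal_le_epsilon)
    fix \<epsilon> :: real assume \<epsilon>: "\<epsilon> > 0"
    obtain N0 where N0: "lev \<rho> (- int N0) < \<epsilon>" using lev_small[OF \<rho> \<epsilon>] by blast
    define N where "N = max N0 (nat \<bar>k\<bar>)"
    have Nk: "- int N \<le> k" "k \<le> int N" unfolding N_def by auto
    have "lev \<rho> (- int N - 1) \<le> lev \<rho> (- int N0)" unfolding N_def by (subst lev_le_iff[OF \<rho>]) auto
    hence small: "lev \<rho> (- int N - 1) < \<epsilon>" using N0 by linarith
    have "(\<Sum>l\<in>{- int N..k}. ennreal (w l)) \<le> \<psi> N x"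
    proof -
      have "(\<Sum>l\<in>{- int N..k}. ennreal (w l)) = (\<Sum>l\<in>{- int N..k}. ennreal (w l) * indicator (Hk l) x)"
        using H by (intro sum.cong refl) (auto simp: indicator_def)
      also have "\<dots> \<le> \<psi> N x" unfolding \<psi>_def using Nk by (intro sum_mono2) auto
      finally show ?thesis .
    qed
    moreover have "(\<Sum>l\<in>{- int N..k}. ennreal (w l)) = ennreal (lev \<rho> k - lev \<rho> (- int N - 1))"
    proof -
      have "(\<Sum>l\<in>{- int N..k}. ennreal (w l)) = ennreal (\<Sum>l\<in>{- int N..k}. w l)"
        using w_pos by (intro sum_ennreal) (auto intro: less_imp_le)
      thus ?thesis unfolding w_def using lev_tele[OF \<rho> Nk(1)] by simp
    qed
    ultimately have "ennreal (lev \<rho> k - lev \<rho> (- int N - 1)) \<le> (SUP N. \<psi> N x)"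
      by (metis SUP_upper2 UNIV_I)
    moreover have "ennreal (lev \<rho> k) \<le> ennreal (lev \<rho> k - lev \<rho> (- int N - 1)) + ennreal \<epsilon>"
    proof -
      have "lev \<rho> k - lev \<rho> (- int N - 1) \<ge> 0" using lev_le_iff[OF \<rho>, of "- int N - 1" k] Nk by simp
      hence "ennreal (lev \<rho> k - lev \<rho> (- int N - 1)) + ennreal \<epsilon> = ennreal (lev \<rho> k - lev \<rho> (- int N - 1) + \<epsilon>)"
        using \<epsilon> by (simp add: ennreal_plus)
      moreover have "lev \<rho> k \<le> lev \<rho> k - lev \<rho> (- int N - 1) + \<epsilon>" using small by linarith
      ultimately show ?thesis by (simp add: ennreal_leI)
    qed
    ultimately show "ennreal (lev \<rho> k) \<le> (SUP N. \<psi> N x) + ennreal \<epsilon>"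
      by (meson add_right_mono order_trans)
  qed
  have f_le: "f x \<le> \<phi> x" for x
  proof (cases "f x" rule: ennreal_cases)
    case (real y)
    show ?thesis
    proof (cases "y = 0")
      case True thus ?thesis using real by simp
    next
      case False
      hence y: "y > 0" using real by simp
      obtain k where k: "lev \<rho> k < y" "y \<le> lev \<rho> (k + 1)" using lev_bracket[OF \<rho> y] by blast
      have "ennreal (lev \<rho> k) \<le> (SUP N. \<psi> N x)"
      proof (rule key, intro allI impI)
        fix l assume "l \<le> k"
        hence "lev \<rho> l < y" using k(1) lev_le_iff[OF \<rho>, of l k] by simp
        hence "ennreal (lev \<rho> l) < f x" using real lev_pos[OF \<rho>, of l] by (simp add: ennreal_less_iff)
        thus "x \<in> Hk l" using f_A Hk(2) by blast
      qed
      hence "ennreal \<rho> * ennreal (lev \<rho> k) \<le> \<phi> x" unfolding \<phi>_def by (rule mult_left_mono) simp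
      moreover have "ennreal \<rho> * ennreal (lev \<rho> k) = ennreal (lev \<rho> (k + 1))"
        using \<rho> lev_pos[OF \<rho>, of k] by (simp add: lev_Suc[OF \<rho>] ennreal_mult)
      moreover have "f x \<le> ennreal (lev \<rho> (k + 1))" using real k(2) by (simp add: ennreal_leI)
      ultimately show ?thesis by simp
    qed
  next
    case top
    have all: "ennreal (lev \<rho> k) \<le> (SUP N. \<psi> N x)" for k
    proof (rule key, intro allI impI)
      fix l show "x \<in> Hk l" using f_A[of "lev \<rho> l" x] Hk(2)[of l] top by auto
    qed
    have "(SUP N. \<psi> N x) = \<infinity>"
    proof (rule ccontr)
      assume "(SUP N. \<psi> N x) \<noteq> \<infinity>"
      then obtain r where r: "(SUP N. \<psi> N x) = ennreal r" "r \<ge> 0" by (cases "SUP N. \<psi> N x") auto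
      obtain n :: nat where "r < lev \<rho> (int n)" using lev_large[OF \<rho>] by blast
      hence "ennreal r < ennreal (lev \<rho> (int n))" using r(2) by (simp add: ennreal_less_iff)
      thus False using all[of "int n"] r(1) by simp
    qed
    hence "\<phi> x = ennreal \<rho> * \<infinity>" unfolding \<phi>_def by (simp only:)
    moreover have "ennreal \<rho> \<noteq> 0" using \<rho> by simp
    ultimately have "\<phi> x = \<infinity>" by (simp add: ennreal_mult_top)
    thus ?thesis by simp
  qed
  have "upper_integral M f \<le> (\<integral>\<^sup>+x. \<phi> x \<partial>M)"
    unfolding upper_integral_def by (rule INF_lower) (use \<phi>_meas f_le in auto)
  also have "\<dots> \<le> ennreal (\<rho> * s)" by (rule int_\<phi>)
  finally show ?thesis unfolding f_def .
qed

end


theorem lemma3p3: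
  fixes E :: "('a::metric_space \<times> 'b::metric_space) set"
    and \<Delta> :: "real set" and g h :: "real \<Rightarrow> real"
  assumes "scale \<Delta>" and "hausdorff_fun g" and "hausdorff_fun h"
  shows "P0 dmax \<Delta> (\<lambda>t. g t * h t) E \<ge>
         upper_integral (Pmeasure \<Delta> h) (\<lambda>x. lowerB0 dist g (xsection E x))"
proof -
  have gpos: "\<And>t. t > 0 \<Longrightarrow> g t > 0" using assms(2) unfolding hausdorff_fun_def by blast
  have hpos: "\<And>t. t > 0 \<Longrightarrow> h t > 0" using assms(3) unfolding hausdorff_fun_def by blast
  let ?M = "Pmeasure \<Delta> h :: 'a measure"
  let ?f = "\<lambda>x. lowerB0 dist g (xsection E x)"
  let ?S = "P0 dmax \<Delta> (\<lambda>t. g t * h t) E"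
  have sig: "sigma_sets UNIV (sets (borel :: 'a measure)) = sets borel"
    using sets.sigma_sets_eq[of "borel :: 'a measure"] by simp
  show ?thesis
  proof (cases "measure_space UNIV (sets borel) (Pmeas dist \<Delta> h :: 'a set \<Rightarrow> ennreal)")
    case False
    have em: "emeasure ?M B = 0" for B
      unfolding Pmeasure_def using False by (simp add: emeasure_measure_of_conv sig)
    have sM: "sets ?M = sets borel" unfolding Pmeasure_def by (simp add: sets_measure_of_conv sig)
    have "upper_integral ?M ?f \<le> (\<integral>\<^sup>+x. \<infinity> \<partial>?M)"
      unfolding upper_integral_def by (rule INF_lower) auto
    also have "\<dots> = 0" by (simp add: em)
    finally show ?thesis by simp
  next
    case True
    interpret pm \<Delta> h ?M by unfold_locales (rule refl, rule True)
    show ?thesis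
    proof (cases "?S = \<infinity>")
      case True thus ?thesis by simp
    next
      case False
      then obtain S0 where S0: "?S = ennreal S0" "S0 \<ge> 0" by (cases ?S) auto
      show ?thesis
      proof (rule ennreal_le_epsilon)
        fix e :: real assume e: "e > 0"
        define s where "s = S0 + e / 2"
        define \<rho> where "\<rho> = (S0 + e) / s"
        have s: "s > 0" unfolding s_def using S0 e by simp
        have \<rho>: "\<rho> > 1" unfolding \<rho>_def using s e by (simp add: s_def field_simps)
        have Sl: "?S < ennreal s" unfolding S0(1) s_def using S0(2) e by (simp add: ennreal_less_iff)
        have "upper_integral ?M ?f \<le> ennreal (\<rho> * s)" by (rule main_bound[OF gpos hpos Sl \<rho>])
        also have "\<rho> * s = S0 + e" unfolding \<rho>_def using s by simp
        also have "ennreal (S0 + e) = ?S + ennreal e" using S0 e by (simp add: ennreal_plus)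
        finally show "upper_integral ?M ?f \<le> ?S + ennreal e" .
      qed
    qed
  qed
qed


end
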